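(* Let $\mathcal V$ be a subcanonical descent category, $k$ a natural number, and $f:X\to Y$ a hypercover of $k$-groupoids. Then $X_n\to\mathrm{Map}(\partial\Delta^n\hookrightarrow\Delta^n,f)$ is an isomorphism for all $n\ge k$.
   Context: A descent category is a small category $\mathcal V$ with a subcategory of morphisms called covers such that: $\mathcal V$ has finite limits; pullbacks of covers are covers; if $f$ and $g\circ f$ are covers then $g$ is a cover. It is subcanonical if every cover is an effective epimorphism (i.e. $f:X\to Y$ is the coequalizer of $X\times_YX\rightrightarrows X$). A simplicial space is a simplicial object in $\mathcal V$; $\mathrm{Map}(T,X)$ is the finite limit representing simplicial maps $T\to X$; $\mathrm{Map}(S\hookrightarrow T,f)=\mathrm{Map}(S,X)\times_{\mathrm{Map}(S,Y)}\mathrm{Map}(T,Y)$. $\Lambda^n_i=\bigcup_{j\ne i}\partial_j\Delta^n$. A $k$-groupoid is a simplicial space with $X_n\to\mathrm{Map}(\Lambda^n_i,X)$ a cover for $n>0$, $0\le i\le n$, and an isomorphism for $n>k$. A hypercover is a morphism $f$ with $X_n\to\mathrm{Map}(\partial\Delta^n\hookrightarrow\Delta^n,f)$ a cover for all $n\ge0$. *)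

theory Defs
  imports Main
begin

record ('o,'m) cat =
  Ob  :: "'o set"
  Ar  :: "'m set"
  cdom :: "'m \<Rightarrow> 'o"
  ccod :: "'m \<Rightarrow> 'o"
  cmp :: "'m \<Rightarrow> 'm \<Rightarrow> 'm"   (* cmp g f = g o f *)
  idt :: "'o \<Rightarrow> 'm"

definition hom :: "('o,'m) cat \<Rightarrow> 'o \<Rightarrow> 'o \<Rightarrow> 'm set" where
  "hom C A B = {g \<in> Ar C. cdom C g = A \<and> ccod C g = B}"

definition is_cat :: "('o,'m) cat \<Rightarrow> bool" where
  "is_cat C \<longleftrightarrow>
     (\<forall>g\<in>Ar C. cdom C g \<in> Ob C \<and> ccod C g \<in> Ob C) \<and>
     (\<forall>A\<in>Ob C. idt C A \<in> hom C A A) \<and>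
     (\<forall>f g. f \<in> Ar C \<and> g \<in> Ar C \<and> ccod C f = cdom C g \<longrightarrow>
            cmp C g f \<in> hom C (cdom C f) (ccod C g)) \<and>
     (\<forall>f g h. f \<in> Ar C \<and> g \<in> Ar C \<and> h \<in> Ar C \<and> ccod C f = cdom C g \<and> ccod C g = cdom C h \<longrightarrow>
            cmp C h (cmp C g f) = cmp C (cmp C h g) f) \<and>
     (\<forall>f\<in>Ar C. cmp C f (idt C (cdom C f)) = f \<and> cmp C (idt C (ccod C f)) f = f)"

definition iso :: "('o,'m) cat \<Rightarrow> 'm \<Rightarrow> bool" where
  "iso C f \<longleftrightarrow> f \<in> Ar C \<and> (\<exists>g \<in> hom C (ccod C f) (cdom C f).
      cmp C g f = idt C (cdom C f) \<and> cmp C f g = idt C (ccod C f))"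

definition graph_cone ::
  "('o,'m) cat \<Rightarrow> nat set \<Rightarrow> nat set \<Rightarrow> (nat \<Rightarrow> nat) \<Rightarrow> (nat \<Rightarrow> nat) \<Rightarrow> (nat \<Rightarrow> 'o) \<Rightarrow> (nat \<Rightarrow> 'm)
     \<Rightarrow> 'o \<Rightarrow> (nat \<Rightarrow> 'm) \<Rightarrow> bool" where
  "graph_cone C V E src tgt Fo Fm L p \<longleftrightarrow> L \<in> Ob C \<and>
     (\<forall>v\<in>V. p v \<in> hom C L (Fo v)) \<and> (\<forall>e\<in>E. cmp C (Fm e) (p (src e)) = p (tgt e))"

definition has_finite_limits :: "('o,'m) cat \<Rightarrow> bool" where
  "has_finite_limits C \<longleftrightarrow>
    (\<forall>(V::nat set) (E::nat set) src tgt Fo Fm.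
       finite V \<and> finite E \<and> (\<forall>v\<in>V. Fo v \<in> Ob C) \<and>
       (\<forall>e\<in>E. src e \<in> V \<and> tgt e \<in> V \<and> Fm e \<in> hom C (Fo (src e)) (Fo (tgt e))) \<longrightarrow>
       (\<exists>L p. graph_cone C V E src tgt Fo Fm L p \<and>
          (\<forall>L' p'. graph_cone C V E src tgt Fo Fm L' p' \<longrightarrow>
              (\<exists>!u. u \<in> hom C L' L \<and> (\<forall>v\<in>V. cmp C (p v) u = p' v)))))"

definition is_pullback :: "('o,'m) cat \<Rightarrow> 'm \<Rightarrow> 'm \<Rightarrow> 'o \<Rightarrow> 'm \<Rightarrow> 'm \<Rightarrow> bool" where
  "is_pullback C r s P p1 p2 \<longleftrightarrow>
     r \<in> Ar C \<and> s \<in> Ar C \<and> ccod C r = ccod C s \<and> P \<in> Ob C \<and>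
     p1 \<in> hom C P (cdom C r) \<and> p2 \<in> hom C P (cdom C s) \<and> cmp C r p1 = cmp C s p2 \<and>
     (\<forall>Q q1 q2. Q \<in> Ob C \<and> q1 \<in> hom C Q (cdom C r) \<and> q2 \<in> hom C Q (cdom C s) \<and>
         cmp C r q1 = cmp C s q2 \<longrightarrow>
         (\<exists>!u. u \<in> hom C Q P \<and> cmp C p1 u = q1 \<and> cmp C p2 u = q2))"

definition effective_epi :: "('o,'m) cat \<Rightarrow> 'm \<Rightarrow> bool" where
  "effective_epi C f \<longleftrightarrow> f \<in> Ar C \<and>
     (\<forall>P p1 p2. is_pullback C f f P p1 p2 \<longrightarrow>
        (\<forall>Z h. Z \<in> Ob C \<and> h \<in> hom C (cdom C f) Z \<and> cmp C h p1 = cmp C h p2 \<longrightarrow>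
           (\<exists>!u. u \<in> hom C (ccod C f) Z \<and> cmp C u f = h)))"

definition descent_category :: "('o,'m) cat \<Rightarrow> 'm set \<Rightarrow> bool" where
  "descent_category C Cov \<longleftrightarrow> is_cat C \<and> has_finite_limits C \<and>
     \<comment> \<open>covers form a (wide) subcategory\<close>
     Cov \<subseteq> Ar C \<and> (\<forall>A\<in>Ob C. idt C A \<in> Cov) \<and>
     (\<forall>f g. f \<in> Cov \<and> g \<in> Cov \<and> ccod C f = cdom C g \<longrightarrow> cmp C g f \<in> Cov) \<and>
     \<comment> \<open>pullbacks of covers are covers\<close>
     (\<forall>f g P p1 p2. f \<in> Cov \<and> is_pullback C f g P p1 p2 \<longrightarrow> p2 \<in> Cov) \<and>
     \<comment> \<open>if f and g o f are covers then g is a cover\<close>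
     (\<forall>f g. f \<in> Cov \<and> g \<in> Ar C \<and> ccod C f = cdom C g \<and> cmp C g f \<in> Cov \<longrightarrow> g \<in> Cov)"

definition subcanonical :: "('o,'m) cat \<Rightarrow> 'm set \<Rightarrow> bool" where
  "subcanonical C Cov \<longleftrightarrow> (\<forall>f\<in>Cov. effective_epi C f)"

text \<open>A morphism [m] -> [n] of the simplex category is a monotone map {0..m} -> {0..n},
  represented by a function nat => nat which is normalised to 0 outside {0..m}.\<close>

definition dmap :: "nat \<Rightarrow> nat \<Rightarrow> (nat \<Rightarrow> nat) \<Rightarrow> bool" where
  "dmap m n \<theta> \<longleftrightarrow> (\<forall>i j. i \<le> j \<and> j \<le> m \<longrightarrow> \<theta> i \<le> \<theta> j) \<and> (\<forall>j\<le>m. \<theta> j \<le> n) \<and>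
                   (\<forall>j. m < j \<longrightarrow> \<theta> j = 0)"

definition dcomp :: "nat \<Rightarrow> (nat \<Rightarrow> nat) \<Rightarrow> (nat \<Rightarrow> nat) \<Rightarrow> (nat \<Rightarrow> nat)" where
  "dcomp m \<theta> \<phi> = (\<lambda>j. if j \<le> m then \<theta> (\<phi> j) else 0)"

definition did :: "nat \<Rightarrow> (nat \<Rightarrow> nat)" where
  "did m = (\<lambda>j. if j \<le> m then j else 0)"

record ('o,'m) sobj =
  sob :: "nat \<Rightarrow> 'o"
  smor :: "nat \<Rightarrow> nat \<Rightarrow> (nat \<Rightarrow> nat) \<Rightarrow> 'm"  (* smor X m n \<theta> : X_n -> X_m for \<theta> : [m] -> [n] *)

definition simplicial_object :: "('o,'m) cat \<Rightarrow> ('o,'m) sobj \<Rightarrow> bool" where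
  "simplicial_object C X \<longleftrightarrow>
     (\<forall>n. sob X n \<in> Ob C) \<and>
     (\<forall>m n \<theta>. dmap m n \<theta> \<longrightarrow> smor X m n \<theta> \<in> hom C (sob X n) (sob X m)) \<and>
     (\<forall>n. smor X n n (did n) = idt C (sob X n)) \<and>
     (\<forall>m k n \<phi> \<theta>. dmap m k \<phi> \<and> dmap k n \<theta> \<longrightarrow>
        smor X m n (dcomp m \<theta> \<phi>) = cmp C (smor X m k \<phi>) (smor X k n \<theta>))"

definition simplicial_map ::
  "('o,'m) cat \<Rightarrow> ('o,'m) sobj \<Rightarrow> ('o,'m) sobj \<Rightarrow> (nat \<Rightarrow> 'm) \<Rightarrow> bool" where
  "simplicial_map C X Y f \<longleftrightarrow> simplicial_object C X \<and> simplicial_object C Y \<and>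
     (\<forall>n. f n \<in> hom C (sob X n) (sob Y n)) \<and>
     (\<forall>m n \<theta>. dmap m n \<theta> \<longrightarrow> cmp C (smor Y m n \<theta>) (f n) = cmp C (f m) (smor X m n \<theta>))"

text \<open>A simplicial subset S of Delta^n is given by S m \<theta> (\<theta> an m-simplex of Delta^n).\<close>

definition Delta :: "nat \<Rightarrow> nat \<Rightarrow> (nat \<Rightarrow> nat) \<Rightarrow> bool" where
  "Delta n m \<theta> \<longleftrightarrow> dmap m n \<theta>"

text \<open>boundary = union of all faces \<partial>_j Delta^n\<close>
definition bdry :: "nat \<Rightarrow> nat \<Rightarrow> (nat \<Rightarrow> nat) \<Rightarrow> bool" where
  "bdry n m \<theta> \<longleftrightarrow> dmap m n \<theta> \<and> (\<exists>j\<le>n. j \<notin> \<theta> ` {0..m})"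

text \<open>horn = union of the faces \<partial>_j Delta^n for j \<noteq> i\<close>
definition horn :: "nat \<Rightarrow> nat \<Rightarrow> nat \<Rightarrow> (nat \<Rightarrow> nat) \<Rightarrow> bool" where
  "horn n i m \<theta> \<longleftrightarrow> dmap m n \<theta> \<and> (\<exists>j\<le>n. j \<noteq> i \<and> j \<notin> \<theta> ` {0..m})"

section \<open>Map(S, X) as the limit representing simplicial maps S -> X\<close>

text \<open>A cone with vertex U: a simplicial map S -> Hom(U, X_\<bullet>).\<close>
definition smap_cone ::
  "('o,'m) cat \<Rightarrow> ('o,'m) sobj \<Rightarrow> (nat \<Rightarrow> (nat \<Rightarrow> nat) \<Rightarrow> bool) \<Rightarrow> 'o \<Rightarrow> (nat \<Rightarrow> (nat \<Rightarrow> nat) \<Rightarrow> 'm) \<Rightarrow> bool" where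
  "smap_cone C X S U a \<longleftrightarrow> U \<in> Ob C \<and>
     (\<forall>m \<theta>. S m \<theta> \<longrightarrow> a m \<theta> \<in> hom C U (sob X m)) \<and>
     (\<forall>m k \<theta> \<phi>. S k \<theta> \<and> dmap m k \<phi> \<longrightarrow> cmp C (smor X m k \<phi>) (a k \<theta>) = a m (dcomp m \<theta> \<phi>))"

definition is_Map ::
  "('o,'m) cat \<Rightarrow> ('o,'m) sobj \<Rightarrow> (nat \<Rightarrow> (nat \<Rightarrow> nat) \<Rightarrow> bool) \<Rightarrow> 'o \<Rightarrow> (nat \<Rightarrow> (nat \<Rightarrow> nat) \<Rightarrow> 'm) \<Rightarrow> bool" where
  "is_Map C X S M \<pi> \<longleftrightarrow> smap_cone C X S M \<pi> \<and>
     (\<forall>U a. smap_cone C X S U a \<longrightarrow>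
        (\<exists>!u. u \<in> hom C U M \<and> (\<forall>m \<theta>. S m \<theta> \<longrightarrow> cmp C (\<pi> m \<theta>) u = a m \<theta>)))"

text \<open>P holds for the canonical morphism X_n -> Map(S, X) (for every choice of the limit).\<close>
definition canon_Map_prop ::
  "('o,'m) cat \<Rightarrow> ('o,'m) sobj \<Rightarrow> (nat \<Rightarrow> (nat \<Rightarrow> nat) \<Rightarrow> bool) \<Rightarrow> nat \<Rightarrow> ('m \<Rightarrow> bool) \<Rightarrow> bool" where
  "canon_Map_prop C X S n P \<longleftrightarrow>
     (\<forall>M \<pi> c. is_Map C X S M \<pi> \<and> c \<in> hom C (sob X n) M \<and>
        (\<forall>m \<theta>. S m \<theta> \<longrightarrow> cmp C (\<pi> m \<theta>) c = smor X m n \<theta>) \<longrightarrow> P c)"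

text \<open>P holds for the canonical morphism
  X_n -> Map(S \<hookrightarrow> Delta^n, f) = Map(S,X) \<times>_{Map(S,Y)} Map(Delta^n,Y)
  (for every choice of the limits and of the pullback).\<close>
definition canon_relMap_prop ::
  "('o,'m) cat \<Rightarrow> ('o,'m) sobj \<Rightarrow> ('o,'m) sobj \<Rightarrow> (nat \<Rightarrow> 'm) \<Rightarrow>
     (nat \<Rightarrow> (nat \<Rightarrow> nat) \<Rightarrow> bool) \<Rightarrow> nat \<Rightarrow> ('m \<Rightarrow> bool) \<Rightarrow> bool" where
  "canon_relMap_prop C X Y f S n P \<longleftrightarrow>
     (\<forall>MX \<pi>X MY \<pi>Y MT \<pi>T r s Pb p1 p2 cX cT c.
        is_Map C X S MX \<pi>X \<and> is_Map C Y S MY \<pi>Y \<and> is_Map C Y (Delta n) MT \<pi>T \<and>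
        r \<in> hom C MX MY \<and> (\<forall>m \<theta>. S m \<theta> \<longrightarrow> cmp C (\<pi>Y m \<theta>) r = cmp C (f m) (\<pi>X m \<theta>)) \<and>
        s \<in> hom C MT MY \<and> (\<forall>m \<theta>. S m \<theta> \<longrightarrow> cmp C (\<pi>Y m \<theta>) s = \<pi>T m \<theta>) \<and>
        is_pullback C r s Pb p1 p2 \<and>
        cX \<in> hom C (sob X n) MX \<and> (\<forall>m \<theta>. S m \<theta> \<longrightarrow> cmp C (\<pi>X m \<theta>) cX = smor X m n \<theta>) \<and>
        cT \<in> hom C (sob X n) MT \<and>
        (\<forall>m \<theta>. Delta n m \<theta> \<longrightarrow> cmp C (\<pi>T m \<theta>) cT = cmp C (f m) (smor X m n \<theta>)) \<and>
        c \<in> hom C (sob X n) Pb \<and> cmp C p1 c = cX \<and> cmp C p2 c = cT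
      \<longrightarrow> P c)"

definition k_groupoid :: "('o,'m) cat \<Rightarrow> 'm set \<Rightarrow> nat \<Rightarrow> ('o,'m) sobj \<Rightarrow> bool" where
  "k_groupoid C Cov k X \<longleftrightarrow> simplicial_object C X \<and>
     (\<forall>n i. 0 < n \<and> i \<le> n \<longrightarrow>
        canon_Map_prop C X (horn n i) n (\<lambda>c. c \<in> Cov) \<and>
        (k < n \<longrightarrow> canon_Map_prop C X (horn n i) n (iso C)))"

definition hypercover ::
  "('o,'m) cat \<Rightarrow> 'm set \<Rightarrow> ('o,'m) sobj \<Rightarrow> ('o,'m) sobj \<Rightarrow> (nat \<Rightarrow> 'm) \<Rightarrow> bool" where
  "hypercover C Cov X Y f \<longleftrightarrow> simplicial_map C X Y f \<and>
     (\<forall>n. canon_relMap_prop C X Y f (bdry n) n (\<lambda>c. c \<in> Cov))"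

end

theory Submission
  imports Defs
begin

lemma dmap_dcomp: "dmap m k \<phi> \<Longrightarrow> dmap k n \<theta> \<Longrightarrow> dmap m n (dcomp m \<theta> \<phi>)"
  unfolding dmap_def dcomp_def by auto

lemma dcomp_assoc: "dmap m k \<psi> \<Longrightarrow> dcomp m (dcomp k \<theta> \<phi>) \<psi> = dcomp m \<theta> (dcomp m \<phi> \<psi>)"
  unfolding dmap_def dcomp_def by auto

lemma dcomp_did_left: "dmap m n \<theta> \<Longrightarrow> dcomp m (did n) \<theta> = \<theta>"
  unfolding dmap_def dcomp_def did_def by (rule ext) auto

lemma dcomp_did_right: "dmap m n \<theta> \<Longrightarrow> dcomp m \<theta> (did m) = \<theta>"
  unfolding dmap_def dcomp_def did_def by (rule ext) auto

lemma dmap_did: "dmap n n (did n)"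
  unfolding dmap_def did_def by auto

lemma dcomp_image: "dmap m k \<phi> \<Longrightarrow> dcomp m \<theta> \<phi> ` {0..m} = \<theta> ` (\<phi> ` {0..m})"
  unfolding dmap_def dcomp_def by force

lemma dmap_eqI: "dmap m n \<theta> \<Longrightarrow> dmap m n' \<theta>' \<Longrightarrow> (\<And>j. j \<le> m \<Longrightarrow> \<theta> j = \<theta>' j) \<Longrightarrow> \<theta> = \<theta>'"
  unfolding dmap_def by (rule ext) (metis not_le)

lemma dmap_le: "dmap m n \<theta> \<Longrightarrow> j \<le> m \<Longrightarrow> \<theta> j \<le> n"
  unfolding dmap_def by blast

lemma dmap_mono: "dmap m n \<theta> \<Longrightarrow> i \<le> j \<Longrightarrow> j \<le> m \<Longrightarrow> \<theta> i \<le> \<theta> j"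
  unfolding dmap_def by blast

lemma dmap_out: "dmap m n \<theta> \<Longrightarrow> m < j \<Longrightarrow> \<theta> j = 0"
  unfolding dmap_def by blast

lemma fact_ex:
  assumes "dmap m n \<theta>"
  shows "\<exists>m' \<iota> \<pi>. dmap m' n \<iota> \<and> strict_mono_on {0..m'} \<iota> \<and> dmap m m' \<pi> \<and>
           \<pi> ` {0..m} = {0..m'} \<and> dcomp m \<iota> \<pi> = \<theta>"
proof -
  define A where "A = \<theta> ` {0..m}"
  define L where "L = sorted_list_of_set A"
  have fA: "finite A" "A \<noteq> {}" unfolding A_def by auto
  have sL: "sorted_wrt (<) L" and setL: "set L = A" and lenL: "length L = card A"
    using fA unfolding L_def by (auto simp: strict_sorted_list_of_set)
  have Lpos: "length L > 0" using fA lenL by (simp add: card_gt_0_iff)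
  define m' where "m' = length L - 1"
  have lt1: "i < length L" if "i \<le> m'" for i using Lpos that unfolding m'_def by linarith
  have lt2: "i \<le> m'" if "i < length L" for i using Lpos that unfolding m'_def by linarith
  have An: "A \<subseteq> {0..n}" using assms unfolding A_def dmap_def by auto
  define \<iota> where "\<iota> = (\<lambda>i. if i \<le> m' then L ! i else 0)"
  define \<pi> where "\<pi> = (\<lambda>j. if j \<le> m then (THE i. i \<le> m' \<and> L ! i = \<theta> j) else 0)"
  have Lmono: "i < i' \<Longrightarrow> i' < length L \<Longrightarrow> L ! i < L ! i'" for i i'
    using sL by (simp add: sorted_wrt_iff_nth_less)
  have dL: "distinct L" using sL by (simp add: strict_sorted_iff)
  have uq: "\<exists>!i. i \<le> m' \<and> L ! i = \<theta> j" if "j \<le> m" for j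
  proof -
    have "\<theta> j \<in> set L" using that setL unfolding A_def by auto
    then obtain i where "i < length L" "L ! i = \<theta> j" by (auto simp: in_set_conv_nth)
    then show ?thesis
    proof (intro ex1I[of _ i] conjI)
      show "i \<le> m'" using \<open>i < length L\<close> by (rule lt2)
      fix i' assume "i' \<le> m' \<and> L ! i' = \<theta> j"
      then have "i' < length L" "L ! i' = L ! i" using lt1 \<open>L ! i = \<theta> j\<close> by auto
      then show "i' = i" using nth_eq_iff_index_eq[OF dL] \<open>i < length L\<close> by blast
    qed
  qed
  have pi1: "\<pi> j \<le> m'" and pi2: "L ! (\<pi> j) = \<theta> j" if "j \<le> m" for j
    using theI'[OF uq[OF that]] that unfolding \<pi>_def by auto
  have d1: "dmap m' n \<iota>"
    unfolding dmap_def \<iota>_def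
  proof (intro conjI allI impI)
    fix i j assume "i \<le> j \<and> j \<le> m'"
    then have ij: "i \<le> j" "j \<le> m'" by auto
    show "(if i \<le> m' then L ! i else 0) \<le> (if j \<le> m' then L ! j else 0)"
    proof (cases "i = j")
      case True then show ?thesis by simp
    next
      case False
      then have "i < j" using ij by simp
      then have "L ! i < L ! j" using Lmono lt1[OF ij(2)] by blast
      moreover have "i \<le> m'" using ij by (rule order_trans)
      ultimately show ?thesis using ij(2) by (simp only: if_True)
    qed
  next
    fix j assume "j \<le> m'"
    then have "j < length L" by (rule lt1)
    then have "L ! j \<in> A" using setL nth_mem by blast
    then show "(if j \<le> m' then L ! j else 0) \<le> n" using An by auto
  qed auto
  have d2: "strict_mono_on {0..m'} \<iota>"
    unfolding strict_mono_on_def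
  proof (intro allI impI)
    fix r s assume a: "r \<in> {0..m'} \<and> s \<in> {0..m'} \<and> r < s"
    then have "r \<le> m'" "s \<le> m'" "r < s" by auto
    then have "L ! r < L ! s" using Lmono lt1 by blast
    then show "\<iota> r < \<iota> s" unfolding \<iota>_def using \<open>r \<le> m'\<close> \<open>s \<le> m'\<close> by (simp only: if_True)
  qed
  have d3: "dmap m m' \<pi>"
    unfolding dmap_def
  proof (intro conjI allI impI)
    fix i j assume a: "i \<le> j \<and> j \<le> m"
    then have "\<theta> i \<le> \<theta> j" using assms unfolding dmap_def by auto
    show "\<pi> i \<le> \<pi> j"
    proof (rule ccontr)
      assume "\<not> \<pi> i \<le> \<pi> j"
      then have "\<pi> j < \<pi> i" by simp
      moreover have "\<pi> i < length L" using pi1 a lt1 by (meson order_trans)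
      ultimately have "L ! (\<pi> j) < L ! (\<pi> i)" using Lmono by blast
      then show False using pi2 a \<open>\<theta> i \<le> \<theta> j\<close> by auto
    qed
  next
    fix j assume "j \<le> m" then show "\<pi> j \<le> m'" by (rule pi1)
  next
    fix j assume "m < j" then show "\<pi> j = 0" unfolding \<pi>_def by auto
  qed
  have d4: "\<pi> ` {0..m} = {0..m'}"
  proof
    show "\<pi> ` {0..m} \<subseteq> {0..m'}" using pi1 by auto
    show "{0..m'} \<subseteq> \<pi> ` {0..m}"
    proof
      fix i assume "i \<in> {0..m'}"
      then have "i < length L" using lt1 by auto
      then have "L ! i \<in> A" using setL nth_mem by blast
      then obtain j where j: "j \<le> m" "L ! i = \<theta> j" unfolding A_def by auto
      then have "\<pi> j = i" using uq[OF j(1)] pi1[OF j(1)] pi2[OF j(1)] \<open>i \<in> {0..m'}\<close> by auto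
      then show "i \<in> \<pi> ` {0..m}" using j by auto
    qed
  qed
  have d5: "dcomp m \<iota> \<pi> = \<theta>"
  proof (rule ext)
    fix j show "dcomp m \<iota> \<pi> j = \<theta> j"
      using pi1 pi2 assms unfolding dcomp_def \<iota>_def dmap_def by auto
  qed
  show ?thesis using d1 d2 d3 d4 d5 by blast
qed

lemma strict_mono_le: "strict_mono_on {0..m} (\<iota>::nat\<Rightarrow>nat) \<Longrightarrow> i \<le> m \<Longrightarrow> i \<le> \<iota> i"
proof (induction i)
  case 0 then show ?case by simp
next
  case (Suc i)
  then have "\<iota> i < \<iota> (Suc i)" unfolding strict_mono_on_def by auto
  then show ?case using Suc by auto
qed

lemma fact_dim: "dmap m' n \<iota> \<Longrightarrow> strict_mono_on {0..m'} \<iota> \<Longrightarrow> m' \<le> n"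
  using strict_mono_le[of m' \<iota> m'] unfolding dmap_def by force

lemma smono_sorted:
  assumes "strict_mono_on {0..m} (\<iota>::nat\<Rightarrow>nat)"
  shows "sorted_wrt (<) (map \<iota> [0..<Suc m])"
  unfolding sorted_wrt_map
proof (rule sorted_wrt_mono_rel[of _ "(<)"])
  fix x y assume "x \<in> set [0..<Suc m]" "y \<in> set [0..<Suc m]" "x < y"
  then have "x \<le> m" "y \<le> m" "x < y" by auto
  then show "\<iota> x < \<iota> y" using assms unfolding strict_mono_on_def by auto
qed (rule sorted_wrt_upt)

lemma fact_uniq:
  assumes "dmap m1 n \<iota>1" "strict_mono_on {0..m1} \<iota>1" "dmap m m1 \<pi>1" "\<pi>1 ` {0..m} = {0..m1}"
    and "dmap m2 n \<iota>2" "strict_mono_on {0..m2} \<iota>2" "dmap m m2 \<pi>2" "\<pi>2 ` {0..m} = {0..m2}"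
    and "dcomp m \<iota>1 \<pi>1 = dcomp m \<iota>2 \<pi>2"
  shows "m1 = m2 \<and> \<iota>1 = \<iota>2 \<and> \<pi>1 = \<pi>2"
proof -
  have im: "\<iota>1 ` {0..m1} = \<iota>2 ` {0..m2}"
    using dcomp_image[OF assms(3), of \<iota>1] dcomp_image[OF assms(7), of \<iota>2] assms(4,8,9) by simp
  have i1: "inj_on \<iota>1 {0..m1}" using assms(2) by (rule strict_mono_on_imp_inj_on)
  have i2: "inj_on \<iota>2 {0..m2}" using assms(6) by (rule strict_mono_on_imp_inj_on)
  have "card (\<iota>1 ` {0..m1}) = Suc m1" using card_image[OF i1] by simp
  moreover have "card (\<iota>2 ` {0..m2}) = Suc m2" using card_image[OF i2] by simp
  ultimately have meq: "m1 = m2" using im by simp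
  have s1: "sorted_wrt (<) (map \<iota>1 [0..<Suc m1])"
    by (rule smono_sorted[OF assms(2)])
  have s2: "sorted_wrt (<) (map \<iota>2 [0..<Suc m1])"
    using smono_sorted[OF assms(6)] meq by simp
  have "set (map \<iota>1 [0..<Suc m1]) = set (map \<iota>2 [0..<Suc m1])"
    using im meq by (simp only: set_map set_upt atLeastLessThanSuc_atLeastAtMost)
  then have leq: "map \<iota>1 [0..<Suc m1] = map \<iota>2 [0..<Suc m1]"
    using s1 s2 strict_sorted_equal by blast
  have ieq: "\<iota>1 = \<iota>2"
  proof (rule dmap_eqI[OF assms(1)])
    show "dmap m1 n \<iota>2" using assms(5) meq by simp
    fix j assume "j \<le> m1"
    then have jl: "j < Suc m1 - 0" by simp
    have "map \<iota>1 [0..<Suc m1] ! j = \<iota>1 (0 + j)" by (rule nth_map_upt[OF jl])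
    moreover have "map \<iota>2 [0..<Suc m1] ! j = \<iota>2 (0 + j)" by (rule nth_map_upt[OF jl])
    ultimately show "\<iota>1 j = \<iota>2 j" using leq by (metis add_0)
  qed
  have peq: "\<pi>1 = \<pi>2"
  proof (rule dmap_eqI[OF assms(3)])
    show "dmap m m1 \<pi>2" using assms(7) meq by simp
    fix j assume j: "j \<le> m"
    have "\<iota>1 (\<pi>1 j) = \<iota>1 (\<pi>2 j)"
      using fun_cong[OF assms(9), of j] j unfolding dcomp_def ieq by simp
    moreover have "\<pi>1 j \<in> {0..m1}" "\<pi>2 j \<in> {0..m1}" using j dmap_le[OF assms(3)] dmap_le[OF assms(7)] meq by auto
    ultimately show "\<pi>1 j = \<pi>2 j" using i1 unfolding inj_on_def by blast
  qed
  show ?thesis using meq ieq peq by blast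
qed


lemma hom_iff: "g \<in> hom C A B \<longleftrightarrow> g \<in> Ar C \<and> cdom C g = A \<and> ccod C g = B"
  unfolding hom_def by simp

lemma hom_ob: "is_cat C \<Longrightarrow> f \<in> hom C A B \<Longrightarrow> A \<in> Ob C \<and> B \<in> Ob C"
  unfolding is_cat_def hom_def by auto

lemma cmp_hom: "is_cat C \<Longrightarrow> f \<in> hom C A B \<Longrightarrow> g \<in> hom C B D \<Longrightarrow> cmp C g f \<in> hom C A D"
  unfolding is_cat_def hom_def by auto

lemma cassoc: "is_cat C \<Longrightarrow> f \<in> hom C A B \<Longrightarrow> g \<in> hom C B D \<Longrightarrow> h \<in> hom C D E \<Longrightarrow>
   cmp C h (cmp C g f) = cmp C (cmp C h g) f"
  unfolding is_cat_def hom_def by auto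

lemma id_hom: "is_cat C \<Longrightarrow> A \<in> Ob C \<Longrightarrow> idt C A \<in> hom C A A"
  unfolding is_cat_def by auto

lemma idl: "is_cat C \<Longrightarrow> f \<in> hom C A B \<Longrightarrow> cmp C (idt C B) f = f"
  unfolding is_cat_def hom_def by auto

lemma idr: "is_cat C \<Longrightarrow> f \<in> hom C A B \<Longrightarrow> cmp C f (idt C A) = f"
  unfolding is_cat_def hom_def by auto

lemma sob_ob: "simplicial_object C X \<Longrightarrow> sob X n \<in> Ob C"
  unfolding simplicial_object_def by auto

lemma smor_hom: "simplicial_object C X \<Longrightarrow> dmap m n \<theta> \<Longrightarrow> smor X m n \<theta> \<in> hom C (sob X n) (sob X m)"
  unfolding simplicial_object_def by auto

lemma smor_comp: "simplicial_object C X \<Longrightarrow> dmap m k \<phi> \<Longrightarrow> dmap k n \<theta> \<Longrightarrow>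
   smor X m n (dcomp m \<theta> \<phi>) = cmp C (smor X m k \<phi>) (smor X k n \<theta>)"
  unfolding simplicial_object_def by auto

lemma smor_id: "simplicial_object C X \<Longrightarrow> smor X n n (did n) = idt C (sob X n)"
  unfolding simplicial_object_def by auto

lemma smor_pt: "is_cat C \<Longrightarrow> simplicial_object C X \<Longrightarrow> dmap m k \<phi> \<Longrightarrow> dmap k n \<theta> \<Longrightarrow>
   z \<in> hom C U (sob X n) \<Longrightarrow>
   cmp C (smor X m k \<phi>) (cmp C (smor X k n \<theta>) z) = cmp C (smor X m n (dcomp m \<theta> \<phi>)) z"
  by (simp add: smor_comp cassoc[OF _ _ smor_hom smor_hom])

lemma smor_pt_id: "is_cat C \<Longrightarrow> simplicial_object C X \<Longrightarrow> z \<in> hom C U (sob X n) \<Longrightarrow>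
   cmp C (smor X n n (did n)) z = z"
  by (simp add: smor_id idl)

definition ssub :: "nat \<Rightarrow> (nat \<Rightarrow> (nat \<Rightarrow> nat) \<Rightarrow> bool) \<Rightarrow> bool" where
  "ssub n S \<longleftrightarrow> (\<exists>P. (\<forall>A B. P A \<longrightarrow> B \<subseteq> A \<longrightarrow> P B) \<and>
      (\<forall>m \<theta>. S m \<theta> \<longleftrightarrow> dmap m n \<theta> \<and> P (\<theta> ` {0..m})))"

lemma ssub_dmap: "ssub n S \<Longrightarrow> S m \<theta> \<Longrightarrow> dmap m n \<theta>"
proof -
  assume "ssub n S" "S m \<theta>"
  then obtain P where "\<forall>m \<theta>. S m \<theta> \<longleftrightarrow> dmap m n \<theta> \<and> P (\<theta> ` {0..m})" unfolding ssub_def by (elim exE conjE) (rule that)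
  then show ?thesis using \<open>S m \<theta>\<close> by blast
qed

lemma ssub_img: "ssub n S \<Longrightarrow> S m \<theta> \<Longrightarrow> dmap m' n \<iota> \<Longrightarrow> \<iota> ` {0..m'} \<subseteq> \<theta> ` {0..m} \<Longrightarrow> S m' \<iota>"
proof -
  assume a: "ssub n S" "S m \<theta>" "dmap m' n \<iota>" "\<iota> ` {0..m'} \<subseteq> \<theta> ` {0..m}"
  then obtain P where P: "\<forall>A B. P A \<longrightarrow> B \<subseteq> A \<longrightarrow> P B" "\<forall>m \<theta>. S m \<theta> \<longleftrightarrow> dmap m n \<theta> \<and> P (\<theta> ` {0..m})"
    unfolding ssub_def by (elim exE conjE) (rule that)
  have "P (\<theta> ` {0..m})" using iffD1[OF P(2)[rule_format, of m \<theta>] a(2)] by (rule conjunct2)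
  then have "P (\<iota> ` {0..m'})" by (rule P(1)[rule_format, OF _ a(4)])
  then show ?thesis by (rule iffD2[OF P(2)[rule_format, of m' \<iota>], OF conjI[OF a(3)]])
qed

lemma ssub_closed: "ssub n S \<Longrightarrow> S k \<theta> \<Longrightarrow> dmap m k \<phi> \<Longrightarrow> S m (dcomp m \<theta> \<phi>)"
proof -
  assume a: "ssub n S" "S k \<theta>" "dmap m k \<phi>"
  have d: "dmap m n (dcomp m \<theta> \<phi>)" using dmap_dcomp[OF a(3) ssub_dmap[of n S k \<theta>, OF a(1,2)]] .
  have "dcomp m \<theta> \<phi> ` {0..m} \<subseteq> \<theta> ` {0..k}"
  proof
    fix x assume "x \<in> dcomp m \<theta> \<phi> ` {0..m}"
    then obtain j where j: "j \<in> {0..m}" "x = dcomp m \<theta> \<phi> j" by (rule imageE)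
    then have x: "x = \<theta> (\<phi> j)" unfolding dcomp_def by simp
    have "\<phi> j \<in> {0..k}" using dmap_le[OF a(3)] j(1) by simp
    then show "x \<in> \<theta> ` {0..k}" unfolding x by (rule imageI)
  qed
  then show ?thesis by (rule ssub_img[of n S k \<theta> m "dcomp m \<theta> \<phi>", OF a(1,2) d])
qed

lemma ssub_Delta: "ssub n (Delta n)"
  unfolding ssub_def Delta_def by (rule exI[of _ "\<lambda>A. True"]) simp

lemma ssub_bdry: "ssub n (bdry n)"
  unfolding ssub_def bdry_def by (rule exI[of _ "\<lambda>A. \<exists>j\<le>n. j \<notin> A"], intro conjI, blast, simp)

lemma ssub_horn: "ssub n (horn n i)"
  unfolding ssub_def horn_def by (rule exI[of _ "\<lambda>A. \<exists>j\<le>n. j \<noteq> i \<and> j \<notin> A"], intro conjI, blast, simp)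

lemma coneD1: "smap_cone C X S U a \<Longrightarrow> U \<in> Ob C"
  unfolding smap_cone_def by blast
lemma coneD2: "smap_cone C X S U a \<Longrightarrow> S m \<theta> \<Longrightarrow> a m \<theta> \<in> hom C U (sob X m)"
  unfolding smap_cone_def by blast
lemma coneD3: "smap_cone C X S U a \<Longrightarrow> S k \<theta> \<Longrightarrow> dmap m k \<phi> \<Longrightarrow>
   cmp C (smor X m k \<phi>) (a k \<theta>) = a m (dcomp m \<theta> \<phi>)"
  unfolding smap_cone_def by blast
lemma coneI: "U \<in> Ob C \<Longrightarrow> (\<And>m \<theta>. S m \<theta> \<Longrightarrow> a m \<theta> \<in> hom C U (sob X m)) \<Longrightarrow>
   (\<And>m k \<theta> \<phi>. S k \<theta> \<Longrightarrow> dmap m k \<phi> \<Longrightarrow> cmp C (smor X m k \<phi>) (a k \<theta>) = a m (dcomp m \<theta> \<phi>))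
   \<Longrightarrow> smap_cone C X S U a"
  unfolding smap_cone_def by blast

lemma canon_cone: "is_cat C \<Longrightarrow> simplicial_object C X \<Longrightarrow> ssub n S \<Longrightarrow>
  smap_cone C X S (sob X n) (\<lambda>m \<theta>. smor X m n \<theta>)"
proof -
  assume a: "is_cat C" "simplicial_object C X" "ssub n S"
  show ?thesis
  proof (rule coneI)
    show "sob X n \<in> Ob C" using sob_ob[OF a(2)] .
    show "smor X m n \<theta> \<in> hom C (sob X n) (sob X m)" if "S m \<theta>" for m \<theta>
      using smor_hom[OF a(2) ssub_dmap[of n S m \<theta>, OF a(3) that]] .
    show "cmp C (smor X m k \<phi>) (smor X k n \<theta>) = smor X m n (dcomp m \<theta> \<phi>)"
      if "S k \<theta>" "dmap m k \<phi>" for m k \<theta> \<phi>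
      using smor_comp[OF a(2) that(2) ssub_dmap[of n S k \<theta>, OF a(3) that(1)]] by simp
  qed
qed

lemma cone_cmp: "is_cat C \<Longrightarrow> simplicial_object C X \<Longrightarrow> ssub n S \<Longrightarrow> smap_cone C X S U a \<Longrightarrow> g \<in> hom C V U \<Longrightarrow>
  smap_cone C X S V (\<lambda>m \<theta>. cmp C (a m \<theta>) g)"
proof (rule coneI)
  assume c: "is_cat C" "simplicial_object C X" "ssub n S" "smap_cone C X S U a" "g \<in> hom C V U"
  show "V \<in> Ob C" using hom_ob[OF c(1) c(5)] by blast
  fix m \<theta> assume "S m \<theta>"
  then show "cmp C (a m \<theta>) g \<in> hom C V (sob X m)" using cmp_hom[OF c(1) c(5) coneD2[of C X S U a, OF c(4)]] by blast
next
  fix m k \<theta> \<phi>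
  assume c: "is_cat C" "simplicial_object C X" "ssub n S" "smap_cone C X S U a" "g \<in> hom C V U"
    and s: "S k \<theta>" "dmap m k \<phi>"
  have "cmp C (smor X m k \<phi>) (cmp C (a k \<theta>) g) = cmp C (cmp C (smor X m k \<phi>) (a k \<theta>)) g"
    using cassoc[OF c(1) c(5) coneD2[of C X S U a, OF c(4) s(1)] smor_hom[OF c(2) s(2)]] .
  also have "\<dots> = cmp C (a m (dcomp m \<theta> \<phi>)) g" using coneD3[of C X S U a, OF c(4) s] by simp
  finally show "cmp C (smor X m k \<phi>) (cmp C (a k \<theta>) g) = cmp C (a m (dcomp m \<theta> \<phi>)) g" .
qed

lemma pt_cone: "is_cat C \<Longrightarrow> simplicial_object C X \<Longrightarrow> ssub n S \<Longrightarrow> z \<in> hom C U (sob X n) \<Longrightarrow>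
  smap_cone C X S U (\<lambda>m \<theta>. cmp C (smor X m n \<theta>) z)"
proof -
  assume a: "is_cat C" "simplicial_object C X" "ssub n S" "z \<in> hom C U (sob X n)"
  show ?thesis using cone_cmp[OF a(1,2,3) canon_cone[OF a(1,2,3)] a(4)] by simp
qed

lemma smap_X: "simplicial_map C X Y f \<Longrightarrow> simplicial_object C X"
  unfolding simplicial_map_def by blast
lemma smap_Y: "simplicial_map C X Y f \<Longrightarrow> simplicial_object C Y"
  unfolding simplicial_map_def by blast
lemma smap_hom: "simplicial_map C X Y f \<Longrightarrow> f n \<in> hom C (sob X n) (sob Y n)"
  unfolding simplicial_map_def by blast
lemma smap_nat: "simplicial_map C X Y f \<Longrightarrow> dmap m n \<theta> \<Longrightarrow> cmp C (smor Y m n \<theta>) (f n) = cmp C (f m) (smor X m n \<theta>)"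
  unfolding simplicial_map_def by blast

lemma cone_map: "is_cat C \<Longrightarrow> simplicial_map C X Y f \<Longrightarrow> smap_cone C X S U a \<Longrightarrow> ssub n S \<Longrightarrow>
  smap_cone C Y S U (\<lambda>m \<theta>. cmp C (f m) (a m \<theta>))"
proof (rule coneI)
  assume c: "is_cat C" "simplicial_map C X Y f" "smap_cone C X S U a" "ssub n S"
  have sX: "simplicial_object C X" and sY: "simplicial_object C Y"
    and fh: "\<And>n. f n \<in> hom C (sob X n) (sob Y n)"
    and fn: "\<And>m n \<theta>. dmap m n \<theta> \<Longrightarrow> cmp C (smor Y m n \<theta>) (f n) = cmp C (f m) (smor X m n \<theta>)"
    using smap_X[OF c(2)] smap_Y[OF c(2)] smap_hom[OF c(2)] smap_nat[OF c(2)] by auto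
  show "U \<in> Ob C" using coneD1[OF c(3)] .
  show "cmp C (f m) (a m \<theta>) \<in> hom C U (sob Y m)" if "S m \<theta>" for m \<theta>
    using cmp_hom[OF c(1) coneD2[of C X S U a, OF c(3) that] fh] .
  fix m k \<theta> \<phi> assume s: "S k \<theta>" "dmap m k \<phi>"
  have "cmp C (smor Y m k \<phi>) (cmp C (f k) (a k \<theta>)) = cmp C (cmp C (smor Y m k \<phi>) (f k)) (a k \<theta>)"
    using cassoc[OF c(1) coneD2[of C X S U a, OF c(3) s(1)] fh smor_hom[OF sY s(2)]] .
  also have "\<dots> = cmp C (cmp C (f m) (smor X m k \<phi>)) (a k \<theta>)" using fn[OF s(2)] by simp
  also have "\<dots> = cmp C (f m) (cmp C (smor X m k \<phi>) (a k \<theta>))"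
    using cassoc[OF c(1) coneD2[of C X S U a, OF c(3) s(1)] smor_hom[OF sX s(2)] fh] by simp
  also have "\<dots> = cmp C (f m) (a m (dcomp m \<theta> \<phi>))" using coneD3[of C X S U a, OF c(3) s] by simp
  finally show "cmp C (smor Y m k \<phi>) (cmp C (f k) (a k \<theta>)) = cmp C (f m) (a m (dcomp m \<theta> \<phi>))" .
qed


definition isfact :: "nat \<Rightarrow> nat \<Rightarrow> (nat \<Rightarrow> nat) \<Rightarrow> nat \<Rightarrow> (nat \<Rightarrow> nat) \<Rightarrow> (nat \<Rightarrow> nat) \<Rightarrow> bool" where
  "isfact m n \<theta> m' \<iota> \<pi> \<longleftrightarrow> dmap m' n \<iota> \<and> strict_mono_on {0..m'} \<iota> \<and> dmap m m' \<pi> \<and>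
     \<pi> ` {0..m} = {0..m'} \<and> dcomp m \<iota> \<pi> = \<theta>"

definition canf :: "nat \<Rightarrow> nat \<Rightarrow> (nat \<Rightarrow> nat) \<Rightarrow> nat \<times> (nat \<Rightarrow> nat) \<times> (nat \<Rightarrow> nat)" where
  "canf m n \<theta> = (SOME t. isfact m n \<theta> (fst t) (fst (snd t)) (snd (snd t)))"

lemma canf_spec: "dmap m n \<theta> \<Longrightarrow> isfact m n \<theta> (fst (canf m n \<theta>)) (fst (snd (canf m n \<theta>))) (snd (snd (canf m n \<theta>)))"
proof -
  assume "dmap m n \<theta>"
  then obtain m' \<iota> \<pi> where "isfact m n \<theta> m' \<iota> \<pi>" using fact_ex unfolding isfact_def by blast
  then have "\<exists>t. isfact m n \<theta> (fst t) (fst (snd t)) (snd (snd t))" by (intro exI[of _ "(m',\<iota>,\<pi>)"]) simp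
  then show ?thesis unfolding canf_def by (rule someI_ex)
qed

lemma isfact_uniq: "isfact m n \<theta> m1 \<iota>1 \<pi>1 \<Longrightarrow> isfact m n \<theta> m2 \<iota>2 \<pi>2 \<Longrightarrow> m1 = m2 \<and> \<iota>1 = \<iota>2 \<and> \<pi>1 = \<pi>2"
  unfolding isfact_def using fact_uniq by metis

lemma isfact_canf: "isfact m n \<theta> m1 \<iota>1 \<pi>1 \<Longrightarrow> canf m n \<theta> = (m1, \<iota>1, \<pi>1)"
proof -
  assume a: "isfact m n \<theta> m1 \<iota>1 \<pi>1"
  then have "dmap m n \<theta>" unfolding isfact_def using dmap_dcomp by metis
  from isfact_uniq[OF a canf_spec[OF this]] show ?thesis by (simp add: prod_eq_iff)
qed

definition tcone ::
  "('o,'m) cat \<Rightarrow> ('o,'m) sobj \<Rightarrow> (nat \<Rightarrow> (nat \<Rightarrow> nat) \<Rightarrow> bool) \<Rightarrow> nat \<Rightarrow> 'o \<Rightarrow> (nat \<Rightarrow> (nat \<Rightarrow> nat) \<Rightarrow> 'm) \<Rightarrow> bool" where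
  "tcone C X S n U b \<longleftrightarrow> U \<in> Ob C \<and>
     (\<forall>m \<theta>. m \<le> n \<and> S m \<theta> \<longrightarrow> b m \<theta> \<in> hom C U (sob X m)) \<and>
     (\<forall>m k \<theta> \<phi>. m \<le> n \<and> k \<le> n \<and> S k \<theta> \<and> dmap m k \<phi> \<longrightarrow> cmp C (smor X m k \<phi>) (b k \<theta>) = b m (dcomp m \<theta> \<phi>))"

lemma tconeD2: "tcone C X S n U b \<Longrightarrow> m \<le> n \<Longrightarrow> S m \<theta> \<Longrightarrow> b m \<theta> \<in> hom C U (sob X m)"
  unfolding tcone_def by blast
lemma tconeD3: "tcone C X S n U b \<Longrightarrow> m \<le> n \<Longrightarrow> k \<le> n \<Longrightarrow> S k \<theta> \<Longrightarrow> dmap m k \<phi> \<Longrightarrow>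
   cmp C (smor X m k \<phi>) (b k \<theta>) = b m (dcomp m \<theta> \<phi>)"
  unfolding tcone_def by blast

lemma cone_tcone: "smap_cone C X S U a \<Longrightarrow> tcone C X S n U a"
  unfolding smap_cone_def tcone_def by blast

definition ext :: "('o,'m) cat \<Rightarrow> ('o,'m) sobj \<Rightarrow> nat \<Rightarrow> (nat \<Rightarrow> (nat \<Rightarrow> nat) \<Rightarrow> 'm) \<Rightarrow> nat \<Rightarrow> (nat \<Rightarrow> nat) \<Rightarrow> 'm" where
  "ext C X n b m \<theta> = (case canf m n \<theta> of (m', \<iota>, \<pi>) \<Rightarrow> cmp C (smor X m m' \<pi>) (b m' \<iota>))"

lemma ext_canon: "isfact m n \<theta> m' \<iota> \<pi> \<Longrightarrow> ext C X n b m \<theta> = cmp C (smor X m m' \<pi>) (b m' \<iota>)"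
  unfolding ext_def using isfact_canf by fastforce

lemma isfact_S: "ssub n S \<Longrightarrow> S m \<theta> \<Longrightarrow> isfact m n \<theta> m' \<iota> \<pi> \<Longrightarrow> S m' \<iota>"
proof -
  assume a: "ssub n S" "S m \<theta>" "isfact m n \<theta> m' \<iota> \<pi>"
  have "\<iota> ` {0..m'} = \<theta> ` {0..m}"
    using a(3) dcomp_image[of m m' \<pi> \<iota>] unfolding isfact_def by auto
  then show ?thesis using ssub_img[where S=S, OF a(1,2)] a(3) unfolding isfact_def by auto
qed

lemma ext_any:
  assumes C: "is_cat C" and X: "simplicial_object C X" and S: "ssub n S" and b: "tcone C X S n U b"
    and \<iota>: "dmap m' n \<iota>" "m' \<le> n" "S m' \<iota>" and \<pi>: "dmap m m' \<pi>"
  shows "ext C X n b m (dcomp m \<iota> \<pi>) = cmp C (smor X m m' \<pi>) (b m' \<iota>)"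
proof -
  obtain mp \<iota>p \<pi>p where p: "isfact m m' \<pi> mp \<iota>p \<pi>p" using canf_spec[OF \<pi>] by blast
  have p1: "dmap mp m' \<iota>p" "strict_mono_on {0..mp} \<iota>p" "dmap m mp \<pi>p" "\<pi>p ` {0..m} = {0..mp}"
    "dcomp m \<iota>p \<pi>p = \<pi>" using p unfolding isfact_def by auto
  have mp: "mp \<le> m'" using fact_dim p1 by blast
  have d1: "dmap mp n (dcomp mp \<iota> \<iota>p)" using dmap_dcomp[OF p1(1) \<iota>(1)] .
  obtain mq \<iota>q \<pi>q where q: "isfact mp n (dcomp mp \<iota> \<iota>p) mq \<iota>q \<pi>q" using canf_spec[OF d1] by blast
  have q1: "dmap mq n \<iota>q" "strict_mono_on {0..mq} \<iota>q" "dmap mp mq \<pi>q" "\<pi>q ` {0..mp} = {0..mq}"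
    "dcomp mp \<iota>q \<pi>q = dcomp mp \<iota> \<iota>p" using q unfolding isfact_def by auto
  have mq: "mq \<le> n" using fact_dim q1 by blast
  have Sq: "S mq \<iota>q"
  proof -
    have "\<iota>q ` {0..mq} = dcomp mp \<iota> \<iota>p ` {0..mp}"
      using dcomp_image[OF q1(3), of \<iota>q] q1(4,5) by simp
    also have "\<dots> \<subseteq> \<iota> ` {0..m'}" using dcomp_image[OF p1(1), of \<iota>] dmap_le[OF p1(1)] by auto
    finally show ?thesis using ssub_img[where S=S, OF S \<iota>(3) q1(1)] by blast
  qed
  have th: "dcomp m \<iota> \<pi> = dcomp m \<iota>q (dcomp m \<pi>q \<pi>p)"
    using p1(5) q1(5) dcomp_assoc[OF p1(3)] by metis
  have fq: "isfact m n (dcomp m \<iota> \<pi>) mq \<iota>q (dcomp m \<pi>q \<pi>p)"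
    unfolding isfact_def
  proof (intro conjI)
    show "dmap mq n \<iota>q" "strict_mono_on {0..mq} \<iota>q" by (rule q1(1), rule q1(2))
    show "dmap m mq (dcomp m \<pi>q \<pi>p)" using dmap_dcomp[OF p1(3) q1(3)] .
    show "dcomp m \<pi>q \<pi>p ` {0..m} = {0..mq}" using dcomp_image[OF p1(3), of \<pi>q] p1(4) q1(4) by simp
    show "dcomp m \<iota>q (dcomp m \<pi>q \<pi>p) = dcomp m \<iota> \<pi>" using th by simp
  qed
  have "ext C X n b m (dcomp m \<iota> \<pi>) = cmp C (smor X m mq (dcomp m \<pi>q \<pi>p)) (b mq \<iota>q)"
    by (rule ext_canon[OF fq])
  also have "\<dots> = cmp C (cmp C (smor X m mp \<pi>p) (smor X mp mq \<pi>q)) (b mq \<iota>q)"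
    using smor_comp[OF X p1(3) q1(3)] by simp
  also have "\<dots> = cmp C (smor X m mp \<pi>p) (cmp C (smor X mp mq \<pi>q) (b mq \<iota>q))"
    using cassoc[OF C tconeD2[where S=S, OF b mq Sq] smor_hom[OF X q1(3)] smor_hom[OF X p1(3)]] by simp
  also have "\<dots> = cmp C (smor X m mp \<pi>p) (b mp (dcomp mp \<iota>q \<pi>q))"
    using tconeD3[where S=S, OF b _ mq Sq q1(3)] mp \<iota>(2) by simp
  also have "\<dots> = cmp C (smor X m mp \<pi>p) (b mp (dcomp mp \<iota> \<iota>p))" using q1(5) by simp
  also have "\<dots> = cmp C (smor X m mp \<pi>p) (cmp C (smor X mp m' \<iota>p) (b m' \<iota>))"
    using tconeD3[where S=S, OF b _ \<iota>(2) \<iota>(3) p1(1)] mp \<iota>(2) by simp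
  also have "\<dots> = cmp C (cmp C (smor X m mp \<pi>p) (smor X mp m' \<iota>p)) (b m' \<iota>)"
    using cassoc[OF C tconeD2[where S=S, OF b \<iota>(2) \<iota>(3)] smor_hom[OF X p1(1)] smor_hom[OF X p1(3)]] by simp
  also have "\<dots> = cmp C (smor X m m' \<pi>) (b m' \<iota>)"
    using smor_comp[OF X p1(3) p1(1)] p1(5) by simp
  finally show ?thesis .
qed

lemma ext_agree:
  assumes C: "is_cat C" and X: "simplicial_object C X" and S: "ssub n S" and b: "tcone C X S n U b"
    and m: "m \<le> n" "S m \<theta>"
  shows "ext C X n b m \<theta> = b m \<theta>"
proof -
  have d: "dmap m n \<theta>" using ssub_dmap[where S=S, OF S m(2)] .
  have "ext C X n b m (dcomp m \<theta> (did m)) = cmp C (smor X m m (did m)) (b m \<theta>)"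
    by (rule ext_any[where S=S, OF C X S b d m(1) m(2) dmap_did])
  then show ?thesis using dcomp_did_right[OF d] smor_pt_id[OF C X tconeD2[where S=S, OF b m]] by simp
qed

lemma ext_cone:
  assumes C: "is_cat C" and X: "simplicial_object C X" and S: "ssub n S" and b: "tcone C X S n U b"
  shows "smap_cone C X S U (ext C X n b)"
proof (rule coneI)
  show "U \<in> Ob C" using b unfolding tcone_def by blast
  fix m \<theta> assume s: "S m \<theta>"
  obtain m0 \<iota>0 \<pi>0 where f: "isfact m n \<theta> m0 \<iota>0 \<pi>0" using canf_spec[OF ssub_dmap[where S=S, OF S s]] by blast
  have S0: "S m0 \<iota>0" using isfact_S[where S=S, OF S s f] .
  have m0: "m0 \<le> n" using f fact_dim unfolding isfact_def by blast
  have f1: "dmap m m0 \<pi>0" using f unfolding isfact_def by blast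
  show "ext C X n b m \<theta> \<in> hom C U (sob X m)"
    using ext_canon[OF f, of C X b] cmp_hom[OF C tconeD2[where S=S, OF b m0 S0] smor_hom[OF X f1]] by simp
next
  fix m k \<theta> \<phi> assume s: "S k \<theta>" and \<phi>: "dmap m k \<phi>"
  obtain m0 \<iota>0 \<pi>0 where f: "isfact k n \<theta> m0 \<iota>0 \<pi>0" using canf_spec[OF ssub_dmap[where S=S, OF S s]] by blast
  have S0: "S m0 \<iota>0" using isfact_S[where S=S, OF S s f] .
  have m0: "m0 \<le> n" using f fact_dim unfolding isfact_def by blast
  have f1: "dmap k m0 \<pi>0" "dmap m0 n \<iota>0" "dcomp k \<iota>0 \<pi>0 = \<theta>" using f unfolding isfact_def by blast+
  have "cmp C (smor X m k \<phi>) (ext C X n b k \<theta>) = cmp C (smor X m k \<phi>) (cmp C (smor X k m0 \<pi>0) (b m0 \<iota>0))"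
    using ext_canon[OF f, of C X b] by simp
  also have "\<dots> = cmp C (smor X m m0 (dcomp m \<pi>0 \<phi>)) (b m0 \<iota>0)"
    by (rule smor_pt[OF C X \<phi> f1(1) tconeD2[where S=S, OF b m0 S0]])
  also have "\<dots> = ext C X n b m (dcomp m \<iota>0 (dcomp m \<pi>0 \<phi>))"
    using ext_any[where S=S, OF C X S b f1(2) m0 S0 dmap_dcomp[OF \<phi> f1(1)]] by simp
  also have "\<dots> = ext C X n b m (dcomp m \<theta> \<phi>)"
    using dcomp_assoc[OF \<phi>, of \<iota>0 \<pi>0] f1(3) by simp
  finally show "cmp C (smor X m k \<phi>) (ext C X n b k \<theta>) = ext C X n b m (dcomp m \<theta> \<phi>)" .
qed

lemma ext_full:
  assumes C: "is_cat C" and X: "simplicial_object C X" and S: "ssub n S" and a: "smap_cone C X S U a"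
    and s: "S m \<theta>"
  shows "ext C X n a m \<theta> = a m \<theta>"
proof -
  obtain m0 \<iota>0 \<pi>0 where f: "isfact m n \<theta> m0 \<iota>0 \<pi>0" using canf_spec[OF ssub_dmap[where S=S, OF S s]] by blast
  have S0: "S m0 \<iota>0" using isfact_S[where S=S, OF S s f] .
  have f1: "dmap m m0 \<pi>0" "dcomp m \<iota>0 \<pi>0 = \<theta>" using f unfolding isfact_def by blast+
  show ?thesis using ext_canon[OF f, of C X a] coneD3[where S=S, OF a S0 f1(1)] f1(2) by simp
qed


lemma graph_coneD: "graph_cone C V E src tgt Fo Fm L p \<Longrightarrow>
  L \<in> Ob C \<and> (\<forall>v\<in>V. p v \<in> hom C L (Fo v)) \<and> (\<forall>e\<in>E. cmp C (Fm e) (p (src e)) = p (tgt e))"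
  unfolding graph_cone_def by blast

lemma flimD:
  assumes "has_finite_limits C" "finite V" "finite E" "\<forall>v\<in>V. Fo v \<in> Ob C"
    "\<forall>e\<in>E. src e \<in> V \<and> tgt e \<in> V \<and> Fm e \<in> hom C (Fo (src e)) (Fo (tgt e))"
  shows "\<exists>L p. graph_cone C V E src tgt Fo Fm L p \<and>
          (\<forall>L' p'. graph_cone C V E src tgt Fo Fm L' p' \<longrightarrow>
              (\<exists>!u. u \<in> hom C L' L \<and> (\<forall>v\<in>V. cmp C (p v) u = p' v)))"
  using assms unfolding has_finite_limits_def by blast

lemma pb_exists:
  assumes C: "is_cat C" and FL: "has_finite_limits C" and r: "r \<in> hom C A Z" and s: "s \<in> hom C B Z"
  shows "\<exists>P p1 p2. is_pullback C r s P p1 p2"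
proof -
  define V :: "nat set" where "V = {0,1,2}"
  define E :: "nat set" where "E = {0,1}"
  define src :: "nat \<Rightarrow> nat" where "src = (\<lambda>e. e)"
  define tgt :: "nat \<Rightarrow> nat" where "tgt = (\<lambda>e. 2)"
  define Fo where "Fo = (\<lambda>v::nat. if v = 0 then A else if v = 1 then B else Z)"
  define Fm where "Fm = (\<lambda>e::nat. if e = 0 then r else s)"
  have A: "A \<in> Ob C" "Z \<in> Ob C" using hom_ob[OF C r] by auto
  have B: "B \<in> Ob C" using hom_ob[OF C s] by auto
  have "\<exists>L p. graph_cone C V E src tgt Fo Fm L p \<and>
          (\<forall>L' p'. graph_cone C V E src tgt Fo Fm L' p' \<longrightarrow>
              (\<exists>!u. u \<in> hom C L' L \<and> (\<forall>v\<in>V. cmp C (p v) u = p' v)))"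
    by (rule flimD[OF FL]) (use A B r s in \<open>auto simp: V_def E_def src_def tgt_def Fo_def Fm_def\<close>)
  then obtain L p where gc: "graph_cone C V E src tgt Fo Fm L p"
    and un: "\<And>L' p'. graph_cone C V E src tgt Fo Fm L' p' \<Longrightarrow>
              (\<exists>!u. u \<in> hom C L' L \<and> (\<forall>v\<in>V. cmp C (p v) u = p' v))" by blast
  have L: "L \<in> Ob C" and p0: "p 0 \<in> hom C L A" and p1: "p 1 \<in> hom C L B" and p2: "p 2 \<in> hom C L Z"
    and c0: "cmp C r (p 0) = p 2" and c1: "cmp C s (p 1) = p 2"
    using graph_coneD[OF gc] unfolding V_def E_def src_def tgt_def Fo_def Fm_def by auto
  have rA: "r \<in> Ar C" "cdom C r = A" "ccod C r = Z" using r unfolding hom_def by auto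
  have sB: "s \<in> Ar C" "cdom C s = B" "ccod C s = Z" using s unfolding hom_def by auto
  have "is_pullback C r s L (p 0) (p 1)"
    unfolding is_pullback_def
  proof (intro conjI allI impI)
    show "r \<in> Ar C" "s \<in> Ar C" "ccod C r = ccod C s" "L \<in> Ob C" using rA sB L by auto
    show "p 0 \<in> hom C L (cdom C r)" "p 1 \<in> hom C L (cdom C s)" using p0 p1 rA sB by auto
    show "cmp C r (p 0) = cmp C s (p 1)" using c0 c1 by simp
    fix Q q1 q2
    assume q: "Q \<in> Ob C \<and> q1 \<in> hom C Q (cdom C r) \<and> q2 \<in> hom C Q (cdom C s) \<and> cmp C r q1 = cmp C s q2"
    then have q1: "q1 \<in> hom C Q A" and q2: "q2 \<in> hom C Q B" and qc: "cmp C r q1 = cmp C s q2"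
      using rA sB by auto
    define p' where "p' = (\<lambda>v::nat. if v = 0 then q1 else if v = 1 then q2 else cmp C r q1)"
    have "graph_cone C V E src tgt Fo Fm Q p'"
      unfolding graph_cone_def using q q1 q2 qc cmp_hom[OF C q1 r]
      by (auto simp: V_def E_def src_def tgt_def Fo_def Fm_def p'_def)
    then have eu: "\<exists>!u. u \<in> hom C Q L \<and> (\<forall>v\<in>V. cmp C (p v) u = p' v)" by (rule un)
    have eqv: "(\<forall>v\<in>V. cmp C (p v) u = p' v) \<longleftrightarrow> (cmp C (p 0) u = q1 \<and> cmp C (p 1) u = q2)"
      if u: "u \<in> hom C Q L" for u
    proof
      assume "\<forall>v\<in>V. cmp C (p v) u = p' v"
      then show "cmp C (p 0) u = q1 \<and> cmp C (p 1) u = q2" unfolding V_def p'_def by auto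
    next
      assume a: "cmp C (p 0) u = q1 \<and> cmp C (p 1) u = q2"
      have "cmp C (p 2) u = cmp C r q1"
        using cassoc[OF C u p0 r] c0 a by simp
      then show "\<forall>v\<in>V. cmp C (p v) u = p' v" using a unfolding V_def p'_def by auto
    qed
    show "\<exists>!u. u \<in> hom C Q L \<and> cmp C (p 0) u = q1 \<and> cmp C (p 1) u = q2"
      using eu eqv by metis
  qed
  then show ?thesis by blast
qed


lemma fin_funs: "finite {\<theta>::nat\<Rightarrow>nat. \<forall>x. (x \<in> {0..n} \<longrightarrow> \<theta> x \<in> {0..n}) \<and> (x \<notin> {0..n} \<longrightarrow> \<theta> x = 0)}"
  by (rule finite_set_of_finite_funs) auto

lemma dmap_in_F: "dmap m k \<theta> \<Longrightarrow> m \<le> n \<Longrightarrow> k \<le> n \<Longrightarrow>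
  \<theta> \<in> {\<theta>::nat\<Rightarrow>nat. \<forall>x. (x \<in> {0..n} \<longrightarrow> \<theta> x \<in> {0..n}) \<and> (x \<notin> {0..n} \<longrightarrow> \<theta> x = 0)}"
proof -
  assume a: "dmap m k \<theta>" "m \<le> n" "k \<le> n"
  have "\<theta> x \<in> {0..n}" if "x \<in> {0..n}" for x
  proof (cases "x \<le> m")
    case True then show ?thesis using dmap_le[OF a(1)] a(3) by fastforce
  next
    case False then show ?thesis using dmap_out[OF a(1)] by simp
  qed
  moreover have "\<theta> x = 0" if "x \<notin> {0..n}" for x
    using dmap_out[OF a(1)] that a(2) by simp
  ultimately show ?thesis by blast
qed

lemma tlim_exists:
  assumes C: "is_cat C" and FL: "has_finite_limits C" and X: "simplicial_object C X" and S: "ssub n S"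
  shows "\<exists>L b. tcone C X S n L b \<and> (\<forall>U b'. tcone C X S n U b' \<longrightarrow>
     (\<exists>!u. u \<in> hom C U L \<and> (\<forall>m \<theta>. m \<le> n \<and> S m \<theta> \<longrightarrow> cmp C (b m \<theta>) u = b' m \<theta>)))"
proof -
  define F where "F = {\<theta>::nat\<Rightarrow>nat. \<forall>x. (x \<in> {0..n} \<longrightarrow> \<theta> x \<in> {0..n}) \<and> (x \<notin> {0..n} \<longrightarrow> \<theta> x = 0)}"
  have fF: "finite F" unfolding F_def by (rule fin_funs)
  define D where "D = {(m,\<theta>). m \<le> n \<and> S m \<theta>}"
  define Ed where "Ed = {(m,k,\<theta>,\<phi>). m \<le> n \<and> k \<le> n \<and> S k \<theta> \<and> dmap m k \<phi>}"
  have "D \<subseteq> {0..n} \<times> F"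
  proof
    fix x assume "x \<in> D"
    then obtain m \<theta> where x: "x = (m,\<theta>)" "m \<le> n" "S m \<theta>" unfolding D_def by blast
    have "\<theta> \<in> F" unfolding F_def by (rule dmap_in_F[OF ssub_dmap[where S=S, OF S x(3)] x(2) order_refl])
    then show "x \<in> {0..n} \<times> F" using x by auto
  qed
  then have fD: "finite D" using fF by (meson finite_SigmaI finite_atLeastAtMost finite_subset)
  have "Ed \<subseteq> {0..n} \<times> {0..n} \<times> F \<times> F"
  proof
    fix x assume "x \<in> Ed"
    then obtain m k \<theta> \<phi> where x: "x = (m,k,\<theta>,\<phi>)" "m \<le> n" "k \<le> n" "S k \<theta>" "dmap m k \<phi>"
      unfolding Ed_def by blast
    have "\<theta> \<in> F" unfolding F_def by (rule dmap_in_F[OF ssub_dmap[where S=S, OF S x(4)] x(3) order_refl])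
    moreover have "\<phi> \<in> F" unfolding F_def by (rule dmap_in_F[OF x(5) x(2) x(3)])
    ultimately show "x \<in> {0..n} \<times> {0..n} \<times> F \<times> F" using x by auto
  qed
  then have fEd: "finite Ed" using fF by (meson finite_SigmaI finite_atLeastAtMost finite_subset)
  obtain hv where hv: "bij_betw hv {0..<card D} D" using ex_bij_betw_nat_finite[OF fD] by blast
  obtain he where he: "bij_betw he {0..<card Ed} Ed" using ex_bij_betw_nat_finite[OF fEd] by blast
  define V where "V = {0..<card D}"
  define E where "E = {0..<card Ed}"
  define iv where "iv = inv_into V hv"
  define ie where "ie = inv_into E he"
  have hvV: "v \<in> V \<Longrightarrow> hv v \<in> D" for v using hv unfolding V_def bij_betw_def by auto
  have imV: "hv ` V = D" and injV: "inj_on hv V" using hv unfolding V_def bij_betw_def by auto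
  have imE: "he ` E = Ed" and injE: "inj_on he E" using he unfolding E_def bij_betw_def by auto
  have ivD: "x \<in> D \<Longrightarrow> iv x \<in> V" for x unfolding iv_def by (rule inv_into_into) (simp add: imV)
  have hviv: "x \<in> D \<Longrightarrow> hv (iv x) = x" for x unfolding iv_def by (rule f_inv_into_f) (simp add: imV)
  have ivhv: "v \<in> V \<Longrightarrow> iv (hv v) = v" for v unfolding iv_def by (rule inv_into_f_f[OF injV])
  have heE: "e \<in> E \<Longrightarrow> he e \<in> Ed" for e using he unfolding E_def bij_betw_def by auto
  have ieE: "x \<in> Ed \<Longrightarrow> ie x \<in> E" for x unfolding ie_def by (rule inv_into_into) (simp add: imE)
  have heie: "x \<in> Ed \<Longrightarrow> he (ie x) = x" for x unfolding ie_def by (rule f_inv_into_f) (simp add: imE)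
  define src where "src = (\<lambda>e. iv (fst (snd (he e)), fst (snd (snd (he e)))))"
  define tgt where "tgt = (\<lambda>e. iv (fst (he e), dcomp (fst (he e)) (fst (snd (snd (he e)))) (snd (snd (snd (he e))))))"
  define Fo where "Fo = (\<lambda>v. sob X (fst (hv v)))"
  define Fm where "Fm = (\<lambda>e. smor X (fst (he e)) (fst (snd (he e))) (snd (snd (snd (he e)))))"
  have edge: "src e \<in> V \<and> tgt e \<in> V \<and> hv (src e) = (k, \<theta>) \<and> hv (tgt e) = (m, dcomp m \<theta> \<phi>) \<and>
     Fm e = smor X m k \<phi> \<and> m \<le> n \<and> k \<le> n \<and> S k \<theta> \<and> dmap m k \<phi>"
    if "e \<in> E" "he e = (m,k,\<theta>,\<phi>)" for e m k \<theta> \<phi>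
  proof -
    have x: "m \<le> n" "k \<le> n" "S k \<theta>" "dmap m k \<phi>" using heE[OF that(1)] that(2) unfolding Ed_def by auto
    have d1: "(k,\<theta>) \<in> D" using x unfolding D_def by auto
    have d2: "(m, dcomp m \<theta> \<phi>) \<in> D" using x ssub_closed[where S=S, OF S x(3) x(4)] unfolding D_def by auto
    show ?thesis using x ivD[OF d1] ivD[OF d2] hviv[OF d1] hviv[OF d2] that(2)
      unfolding src_def tgt_def Fm_def by simp
  qed
  have edge': "\<exists>m k \<theta> \<phi>. he e = (m,k,\<theta>,\<phi>)" for e by (metis prod.exhaust)
  have "\<exists>L p. graph_cone C V E src tgt Fo Fm L p \<and>
          (\<forall>L' p'. graph_cone C V E src tgt Fo Fm L' p' \<longrightarrow>
              (\<exists>!u. u \<in> hom C L' L \<and> (\<forall>v\<in>V. cmp C (p v) u = p' v)))"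
  proof (rule flimD[OF FL])
    show "finite V" "finite E" unfolding V_def E_def by auto
    show "\<forall>v\<in>V. Fo v \<in> Ob C" unfolding Fo_def using sob_ob[OF X] by auto
    show "\<forall>e\<in>E. src e \<in> V \<and> tgt e \<in> V \<and> Fm e \<in> hom C (Fo (src e)) (Fo (tgt e))"
    proof
      fix e assume e: "e \<in> E"
      obtain m k \<theta> \<phi> where h: "he e = (m,k,\<theta>,\<phi>)" using edge' by blast
      show "src e \<in> V \<and> tgt e \<in> V \<and> Fm e \<in> hom C (Fo (src e)) (Fo (tgt e))"
        using edge[OF e h] smor_hom[OF X] unfolding Fo_def by auto
    qed
  qed
  then obtain L p where gc: "graph_cone C V E src tgt Fo Fm L p"
    and un: "\<And>L' p'. graph_cone C V E src tgt Fo Fm L' p' \<Longrightarrow>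
              (\<exists>!u. u \<in> hom C L' L \<and> (\<forall>v\<in>V. cmp C (p v) u = p' v))" by blast
  define b where "b = (\<lambda>m \<theta>. p (iv (m,\<theta>)))"
  have gc1: "L \<in> Ob C" "\<And>v. v \<in> V \<Longrightarrow> p v \<in> hom C L (Fo v)"
     "\<And>e. e \<in> E \<Longrightarrow> cmp C (Fm e) (p (src e)) = p (tgt e)"
    using graph_coneD[OF gc] by auto
  have tc: "tcone C X S n L b"
    unfolding tcone_def
  proof (intro conjI allI impI)
    show "L \<in> Ob C" by (rule gc1(1))
    fix m \<theta> assume a: "m \<le> n \<and> S m \<theta>"
    then have d: "(m,\<theta>) \<in> D" unfolding D_def by auto
    show "b m \<theta> \<in> hom C L (sob X m)" using gc1(2)[OF ivD[OF d]] hviv[OF d] unfolding b_def Fo_def by simp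
  next
    fix m k \<theta> \<phi> assume a: "m \<le> n \<and> k \<le> n \<and> S k \<theta> \<and> dmap m k \<phi>"
    then have t: "(m,k,\<theta>,\<phi>) \<in> Ed" unfolding Ed_def by auto
    have e: "ie (m,k,\<theta>,\<phi>) \<in> E" by (rule ieE[OF t])
    have ee: "src (ie (m,k,\<theta>,\<phi>)) \<in> V \<and> tgt (ie (m,k,\<theta>,\<phi>)) \<in> V \<and>
       hv (src (ie (m,k,\<theta>,\<phi>))) = (k, \<theta>) \<and> hv (tgt (ie (m,k,\<theta>,\<phi>))) = (m, dcomp m \<theta> \<phi>) \<and>
       Fm (ie (m,k,\<theta>,\<phi>)) = smor X m k \<phi>"
      using edge[OF e heie[OF t]] by blast
    then have "src (ie (m,k,\<theta>,\<phi>)) = iv (k,\<theta>)" "tgt (ie (m,k,\<theta>,\<phi>)) = iv (m, dcomp m \<theta> \<phi>)"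
      using ivhv by metis+
    then show "cmp C (smor X m k \<phi>) (b k \<theta>) = b m (dcomp m \<theta> \<phi>)"
      using gc1(3)[OF e] ee unfolding b_def by simp
  qed
  have univ: "\<exists>!u. u \<in> hom C U L \<and> (\<forall>m \<theta>. m \<le> n \<and> S m \<theta> \<longrightarrow> cmp C (b m \<theta>) u = b' m \<theta>)"
    if tb: "tcone C X S n U b'" for U b'
  proof -
    define p' where "p' = (\<lambda>v. b' (fst (hv v)) (snd (hv v)))"
    have "graph_cone C V E src tgt Fo Fm U p'"
      unfolding graph_cone_def
    proof (intro conjI ballI)
      show "U \<in> Ob C" using tb unfolding tcone_def by blast
      fix v assume v: "v \<in> V"
      then obtain m \<theta> where h: "hv v = (m,\<theta>)" "m \<le> n" "S m \<theta>" using hvV unfolding D_def by fastforce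
      show "p' v \<in> hom C U (Fo v)" using tconeD2[where S=S, OF tb h(2,3)] h unfolding p'_def Fo_def by simp
    next
      fix e assume e: "e \<in> E"
      obtain m k \<theta> \<phi> where h: "he e = (m,k,\<theta>,\<phi>)" using edge' by blast
      have ee: "hv (src e) = (k, \<theta>) \<and> hv (tgt e) = (m, dcomp m \<theta> \<phi>) \<and>
       Fm e = smor X m k \<phi> \<and> m \<le> n \<and> k \<le> n \<and> S k \<theta> \<and> dmap m k \<phi>" using edge[OF e h] by blast
      then show "cmp C (Fm e) (p' (src e)) = p' (tgt e)"
        using tconeD3[where S=S, OF tb] unfolding p'_def by simp
    qed
    then have eu: "\<exists>!u. u \<in> hom C U L \<and> (\<forall>v\<in>V. cmp C (p v) u = p' v)" by (rule un)
    have eqv: "(\<forall>v\<in>V. cmp C (p v) u = p' v) \<longleftrightarrow> (\<forall>m \<theta>. m \<le> n \<and> S m \<theta> \<longrightarrow> cmp C (b m \<theta>) u = b' m \<theta>)" for u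
    proof
      assume a: "\<forall>v\<in>V. cmp C (p v) u = p' v"
      show "\<forall>m \<theta>. m \<le> n \<and> S m \<theta> \<longrightarrow> cmp C (b m \<theta>) u = b' m \<theta>"
      proof (intro allI impI)
        fix m \<theta> assume "m \<le> n \<and> S m \<theta>"
        then have d: "(m,\<theta>) \<in> D" unfolding D_def by auto
        show "cmp C (b m \<theta>) u = b' m \<theta>" using a ivD[OF d] hviv[OF d] unfolding b_def p'_def by auto
      qed
    next
      assume a: "\<forall>m \<theta>. m \<le> n \<and> S m \<theta> \<longrightarrow> cmp C (b m \<theta>) u = b' m \<theta>"
      show "\<forall>v\<in>V. cmp C (p v) u = p' v"
      proof
        fix v assume v: "v \<in> V"
        then obtain m \<theta> where h: "hv v = (m,\<theta>)" "m \<le> n" "S m \<theta>" using hvV unfolding D_def by fastforce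
        have "iv (m,\<theta>) = v" using ivhv[OF v] h(1) by simp
        then show "cmp C (p v) u = p' v" using a h unfolding b_def p'_def by auto
      qed
    qed
    show ?thesis using eu eqv by simp
  qed
  show ?thesis using tc univ by blast
qed


lemma Map_exists:
  assumes C: "is_cat C" and FL: "has_finite_limits C" and X: "simplicial_object C X" and S: "ssub n S"
  shows "\<exists>M \<pi>. is_Map C X S M \<pi>"
proof -
  obtain L b where tc: "tcone C X S n L b" and
    un: "\<And>U b'. tcone C X S n U b' \<Longrightarrow>
     (\<exists>!u. u \<in> hom C U L \<and> (\<forall>m \<theta>. m \<le> n \<and> S m \<theta> \<longrightarrow> cmp C (b m \<theta>) u = b' m \<theta>))"
    using tlim_exists[where S=S, OF C FL X S] by blast
  have "is_Map C X S L (ext C X n b)"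
    unfolding is_Map_def
  proof (intro conjI allI impI)
    show "smap_cone C X S L (ext C X n b)" by (rule ext_cone[where S=S, OF C X S tc])
    fix U a assume a: "smap_cone C X S U a"
    have eu: "\<exists>!u. u \<in> hom C U L \<and> (\<forall>m \<theta>. m \<le> n \<and> S m \<theta> \<longrightarrow> cmp C (b m \<theta>) u = a m \<theta>)"
      by (rule un[OF cone_tcone[where S=S, OF a]])
    have eqv: "(\<forall>m \<theta>. S m \<theta> \<longrightarrow> cmp C (ext C X n b m \<theta>) u = a m \<theta>) \<longleftrightarrow>
               (\<forall>m \<theta>. m \<le> n \<and> S m \<theta> \<longrightarrow> cmp C (b m \<theta>) u = a m \<theta>)" if u: "u \<in> hom C U L" for u
    proof
      assume h: "\<forall>m \<theta>. S m \<theta> \<longrightarrow> cmp C (ext C X n b m \<theta>) u = a m \<theta>"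
      show "\<forall>m \<theta>. m \<le> n \<and> S m \<theta> \<longrightarrow> cmp C (b m \<theta>) u = a m \<theta>"
      proof (intro allI impI)
        fix m \<theta> assume mt: "m \<le> n \<and> S m \<theta>"
        then have "ext C X n b m \<theta> = b m \<theta>" using ext_agree[where S=S, OF C X S tc] by blast
        then show "cmp C (b m \<theta>) u = a m \<theta>" using h mt by metis
      qed
    next
      assume h: "\<forall>m \<theta>. m \<le> n \<and> S m \<theta> \<longrightarrow> cmp C (b m \<theta>) u = a m \<theta>"
      show "\<forall>m \<theta>. S m \<theta> \<longrightarrow> cmp C (ext C X n b m \<theta>) u = a m \<theta>"
      proof (intro allI impI)
        fix m \<theta> assume s: "S m \<theta>"
        obtain m0 \<iota>0 \<pi>0 where f: "isfact m n \<theta> m0 \<iota>0 \<pi>0"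
          using canf_spec[OF ssub_dmap[where S=S, OF S s]] by blast
        have S0: "S m0 \<iota>0" using isfact_S[where S=S, OF S s f] .
        have m0: "m0 \<le> n" using f fact_dim unfolding isfact_def by blast
        have f1: "dmap m m0 \<pi>0" "dcomp m \<iota>0 \<pi>0 = \<theta>" using f unfolding isfact_def by blast+
        have "cmp C (ext C X n b m \<theta>) u = cmp C (cmp C (smor X m m0 \<pi>0) (b m0 \<iota>0)) u"
          using ext_canon[OF f, of C X b] by simp
        also have "\<dots> = cmp C (smor X m m0 \<pi>0) (cmp C (b m0 \<iota>0) u)"
          using cassoc[OF C u tconeD2[where S=S, OF tc m0 S0] smor_hom[OF X f1(1)]] by simp
        also have "\<dots> = cmp C (smor X m m0 \<pi>0) (a m0 \<iota>0)" using h m0 S0 by simp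
        also have "\<dots> = a m \<theta>" using coneD3[where S=S, OF a S0 f1(1)] f1(2) by simp
        finally show "cmp C (ext C X n b m \<theta>) u = a m \<theta>" .
      qed
    qed
    show "\<exists>!u. u \<in> hom C U L \<and> (\<forall>m \<theta>. S m \<theta> \<longrightarrow> cmp C (ext C X n b m \<theta>) u = a m \<theta>)"
      using eu eqv by metis
  qed
  then show ?thesis by blast
qed


lemma is_MapD1: "is_Map C X S M \<pi> \<Longrightarrow> smap_cone C X S M \<pi>"
  unfolding is_Map_def by blast

lemma is_MapD2: "is_Map C X S M \<pi> \<Longrightarrow> smap_cone C X S U a \<Longrightarrow>
   \<exists>!u. u \<in> hom C U M \<and> (\<forall>m \<theta>. S m \<theta> \<longrightarrow> cmp C (\<pi> m \<theta>) u = a m \<theta>)"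
  unfolding is_Map_def by blast

lemma Map_ex_u:
  assumes "is_Map C X S M \<pi>" "smap_cone C X S U a"
  obtains u where "u \<in> hom C U M" "\<And>m \<theta>. S m \<theta> \<Longrightarrow> cmp C (\<pi> m \<theta>) u = a m \<theta>"
  using is_MapD2[where S=S, OF assms] by blast

lemma Map_uniq:
  assumes "is_Map C X S M \<pi>" "smap_cone C X S U a"
    and "u \<in> hom C U M" "\<And>m \<theta>. S m \<theta> \<Longrightarrow> cmp C (\<pi> m \<theta>) u = a m \<theta>"
    and "u' \<in> hom C U M" "\<And>m \<theta>. S m \<theta> \<Longrightarrow> cmp C (\<pi> m \<theta>) u' = a m \<theta>"
  shows "u = u'"
  using is_MapD2[where S=S, OF assms(1,2)] assms(3-6) by blast

lemma Map_uniq2: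
  assumes "is_Map C X S M \<pi>"
    and "u \<in> hom C U M" "u' \<in> hom C U M" "\<And>m \<theta>. S m \<theta> \<Longrightarrow> cmp C (\<pi> m \<theta>) u = cmp C (\<pi> m \<theta>) u'"
    and C: "is_cat C" and X: "simplicial_object C X" and S: "ssub n S"
  shows "u = u'"
proof -
  have "smap_cone C X S U (\<lambda>m \<theta>. cmp C (\<pi> m \<theta>) u)"
    by (rule cone_cmp[where S=S, OF C X S is_MapD1[where S=S, OF assms(1)] assms(2)])
  from Map_uniq[where S=S, OF assms(1) this assms(2) _ assms(3)] assms(4) show ?thesis by metis
qed

lemma Map_ob: "is_Map C X S M \<pi> \<Longrightarrow> M \<in> Ob C"
  by (rule coneD1[OF is_MapD1])

lemma Map_pi: "is_Map C X S M \<pi> \<Longrightarrow> S m \<theta> \<Longrightarrow> \<pi> m \<theta> \<in> hom C M (sob X m)"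
proof -
  assume a: "is_Map C X S M \<pi>" "S m \<theta>"
  show ?thesis by (rule coneD2[where S=S, OF is_MapD1[where S=S, OF a(1)] a(2)])
qed

lemma Map_canon:
  assumes C: "is_cat C" and X: "simplicial_object C X" and S: "ssub n S" and M: "is_Map C X S M \<pi>"
  obtains c where "c \<in> hom C (sob X n) M" "\<And>m \<theta>. S m \<theta> \<Longrightarrow> cmp C (\<pi> m \<theta>) c = smor X m n \<theta>"
  using Map_ex_u[where S=S, OF M canon_cone[where S=S, OF C X S]] by blast

lemma cone_restrict: "smap_cone C X S U a \<Longrightarrow> (\<And>m \<theta>. S' m \<theta> \<Longrightarrow> S m \<theta>) \<Longrightarrow> smap_cone C X S' U a"
  unfolding smap_cone_def by blast

lemma horn_bdry: "horn n i m \<theta> \<Longrightarrow> bdry n m \<theta>"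
  unfolding horn_def bdry_def by blast

lemma bdry_Delta: "bdry n m \<theta> \<Longrightarrow> Delta n m \<theta>"
  unfolding Delta_def bdry_def by blast

lemma iso_inv: "is_cat C \<Longrightarrow> iso C c \<Longrightarrow> c \<in> hom C A B \<Longrightarrow>
   \<exists>g. g \<in> hom C B A \<and> cmp C g c = idt C A \<and> cmp C c g = idt C B"
  unfolding iso_def hom_def by auto

lemma iso_mono: "is_cat C \<Longrightarrow> iso C c \<Longrightarrow> c \<in> hom C A B \<Longrightarrow> z \<in> hom C U A \<Longrightarrow> z' \<in> hom C U A \<Longrightarrow>
   cmp C c z = cmp C c z' \<Longrightarrow> z = z'"
proof -
  assume a: "is_cat C" "iso C c" "c \<in> hom C A B" "z \<in> hom C U A" "z' \<in> hom C U A" "cmp C c z = cmp C c z'"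
  obtain g where g: "g \<in> hom C B A" "cmp C g c = idt C A" using iso_inv[OF a(1-3)] by blast
  have "z = cmp C (cmp C g c) z" using g(2) idl[OF a(1) a(4)] by simp
  also have "\<dots> = cmp C g (cmp C c z)" using cassoc[OF a(1) a(4) a(3) g(1)] by simp
  also have "\<dots> = cmp C g (cmp C c z')" using a(6) by simp
  also have "\<dots> = cmp C (cmp C g c) z'" using cassoc[OF a(1) a(5) a(3) g(1)] by simp
  also have "\<dots> = z'" using g(2) idl[OF a(1) a(5)] by simp
  finally show ?thesis .
qed

lemma kgrp_so: "k_groupoid C Cov k Z \<Longrightarrow> simplicial_object C Z"
  unfolding k_groupoid_def by blast

lemma kgrp_iso_prop: "k_groupoid C Cov k Z \<Longrightarrow> k < n \<Longrightarrow> i \<le> n \<Longrightarrow> canon_Map_prop C Z (horn n i) n (iso C)"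
  unfolding k_groupoid_def by auto

lemma horn_canon:
  assumes C: "is_cat C" and FL: "has_finite_limits C" and Z: "k_groupoid C Cov k Z" and kn: "k < n" and i: "i \<le> n"
  obtains M \<pi> c where "is_Map C Z (horn n i) M \<pi>" "c \<in> hom C (sob Z n) M"
    "\<And>m \<theta>. horn n i m \<theta> \<Longrightarrow> cmp C (\<pi> m \<theta>) c = smor Z m n \<theta>" "iso C c"
proof -
  have ZZ: "simplicial_object C Z" by (rule kgrp_so[OF Z])
  obtain M \<pi> where M: "is_Map C Z (horn n i) M \<pi>"
    using Map_exists[where S="horn n i", OF C FL ZZ ssub_horn] by blast
  obtain c where c: "c \<in> hom C (sob Z n) M" "\<And>m \<theta>. horn n i m \<theta> \<Longrightarrow> cmp C (\<pi> m \<theta>) c = smor Z m n \<theta>"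
    using Map_canon[where S="horn n i", OF C ZZ ssub_horn M] by blast
  have "iso C c" using kgrp_iso_prop[OF Z kn i] M c unfolding canon_Map_prop_def by blast
  then show ?thesis using that M c by blast
qed

lemma horn_uniq:
  assumes C: "is_cat C" and FL: "has_finite_limits C" and Z: "k_groupoid C Cov k Z" and kn: "k < n" and i: "i \<le> n"
    and z: "z \<in> hom C U (sob Z n)" "z' \<in> hom C U (sob Z n)"
    and eq: "\<And>m \<theta>. horn n i m \<theta> \<Longrightarrow> cmp C (smor Z m n \<theta>) z = cmp C (smor Z m n \<theta>) z'"
  shows "z = z'"
proof -
  have ZZ: "simplicial_object C Z" by (rule kgrp_so[OF Z])
  obtain M \<pi> c where M: "is_Map C Z (horn n i) M \<pi>" and c: "c \<in> hom C (sob Z n) M"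
    "\<And>m \<theta>. horn n i m \<theta> \<Longrightarrow> cmp C (\<pi> m \<theta>) c = smor Z m n \<theta>" "iso C c"
    using horn_canon[OF C FL Z kn i] by blast
  have "cmp C c z = cmp C c z'"
  proof (rule Map_uniq2[where S="horn n i", OF M cmp_hom[OF C z(1) c(1)] cmp_hom[OF C z(2) c(1)] _ C ZZ ssub_horn])
    fix m \<theta> assume h: "horn n i m \<theta>"
    have pi: "\<pi> m \<theta> \<in> hom C M (sob Z m)" by (rule Map_pi[where S="horn n i", OF M h])
    have "cmp C (\<pi> m \<theta>) (cmp C c z) = cmp C (smor Z m n \<theta>) z"
      using cassoc[OF C z(1) c(1) pi] c(2)[OF h] by simp
    moreover have "cmp C (\<pi> m \<theta>) (cmp C c z') = cmp C (smor Z m n \<theta>) z'"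
      using cassoc[OF C z(2) c(1) pi] c(2)[OF h] by simp
    ultimately show "cmp C (\<pi> m \<theta>) (cmp C c z) = cmp C (\<pi> m \<theta>) (cmp C c z')" using eq[OF h] by simp
  qed
  then show ?thesis using iso_mono[OF C c(3) c(1) z] by blast
qed

lemma horn_fill:
  assumes C: "is_cat C" and FL: "has_finite_limits C" and Z: "k_groupoid C Cov k Z" and kn: "k < n" and i: "i \<le> n"
    and a: "smap_cone C Z (horn n i) U a"
  obtains z where "z \<in> hom C U (sob Z n)" "\<And>m \<theta>. horn n i m \<theta> \<Longrightarrow> cmp C (smor Z m n \<theta>) z = a m \<theta>"
proof -
  obtain M \<pi> c where M: "is_Map C Z (horn n i) M \<pi>" and c: "c \<in> hom C (sob Z n) M"
    "\<And>m \<theta>. horn n i m \<theta> \<Longrightarrow> cmp C (\<pi> m \<theta>) c = smor Z m n \<theta>" "iso C c"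
    using horn_canon[OF C FL Z kn i] by blast
  obtain u where u: "u \<in> hom C U M" "\<And>m \<theta>. horn n i m \<theta> \<Longrightarrow> cmp C (\<pi> m \<theta>) u = a m \<theta>"
    using Map_ex_u[where S="horn n i", OF M a] by blast
  obtain g where g: "g \<in> hom C M (sob Z n)" "cmp C c g = idt C M" using iso_inv[OF C c(3) c(1)] by blast
  have z: "cmp C g u \<in> hom C U (sob Z n)" using cmp_hom[OF C u(1) g(1)] .
  have "cmp C (smor Z m n \<theta>) (cmp C g u) = a m \<theta>" if h: "horn n i m \<theta>" for m \<theta>
  proof -
    have pi: "\<pi> m \<theta> \<in> hom C M (sob Z m)" by (rule Map_pi[where S="horn n i", OF M h])
    have "cmp C (smor Z m n \<theta>) (cmp C g u) = cmp C (cmp C (\<pi> m \<theta>) c) (cmp C g u)" using c(2)[OF h] by simp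
    also have "\<dots> = cmp C (\<pi> m \<theta>) (cmp C c (cmp C g u))" using cassoc[OF C z c(1) pi] by simp
    also have "\<dots> = cmp C (\<pi> m \<theta>) (cmp C (cmp C c g) u)" using cassoc[OF C u(1) g(1) c(1)] by simp
    also have "\<dots> = cmp C (\<pi> m \<theta>) u" using g(2) idl[OF C u(1)] by simp
    also have "\<dots> = a m \<theta>" using u(2)[OF h] .
    finally show ?thesis .
  qed
  then show ?thesis using that z by blast
qed


lemma dc_cat: "descent_category C Cov \<Longrightarrow> is_cat C" unfolding descent_category_def by blast
lemma dc_fl: "descent_category C Cov \<Longrightarrow> has_finite_limits C" unfolding descent_category_def by blast
lemma dc_pb: "descent_category C Cov \<Longrightarrow> c \<in> Cov \<Longrightarrow> is_pullback C c g P p1 p2 \<Longrightarrow> p2 \<in> Cov"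
  unfolding descent_category_def by blast

lemma pbD: "is_pullback C r s P p1 p2 \<Longrightarrow> r \<in> Ar C \<and> s \<in> Ar C \<and> ccod C r = ccod C s \<and> P \<in> Ob C \<and>
     p1 \<in> hom C P (cdom C r) \<and> p2 \<in> hom C P (cdom C s) \<and> cmp C r p1 = cmp C s p2"
  unfolding is_pullback_def by blast

lemma pb_univ: "is_pullback C r s P p1 p2 \<Longrightarrow> Q \<in> Ob C \<Longrightarrow> q1 \<in> hom C Q (cdom C r) \<Longrightarrow>
   q2 \<in> hom C Q (cdom C s) \<Longrightarrow> cmp C r q1 = cmp C s q2 \<Longrightarrow>
   \<exists>!u. u \<in> hom C Q P \<and> cmp C p1 u = q1 \<and> cmp C p2 u = q2"
  unfolding is_pullback_def by blast

lemma eff_epiD: "effective_epi C f \<Longrightarrow> is_pullback C f f P p1 p2 \<Longrightarrow> Z \<in> Ob C \<Longrightarrow>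
   h \<in> hom C (cdom C f) Z \<Longrightarrow> cmp C h p1 = cmp C h p2 \<Longrightarrow>
   \<exists>!u. u \<in> hom C (ccod C f) Z \<and> cmp C u f = h"
  unfolding effective_epi_def by blast

lemma cover_epi:
  assumes sc: "subcanonical C Cov" and C: "is_cat C" and FL: "has_finite_limits C"
    and e: "e \<in> Cov" "e \<in> hom C Q U" and h: "h1 \<in> hom C U Z" "h2 \<in> hom C U Z" and eq: "cmp C h1 e = cmp C h2 e"
  shows "h1 = h2"
proof -
  have ee: "effective_epi C e" using sc e(1) unfolding subcanonical_def by blast
  obtain P p1 p2 where pb: "is_pullback C e e P p1 p2" using pb_exists[OF C FL e(2) e(2)] by blast
  have pp: "p1 \<in> hom C P Q" "p2 \<in> hom C P Q" "cmp C e p1 = cmp C e p2" and ed: "cdom C e = Q" "ccod C e = U"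
    using pbD[OF pb] e(2) unfolding hom_def by auto
  have hh: "cmp C h1 e \<in> hom C Q Z" using cmp_hom[OF C e(2) h(1)] .
  have "cmp C (cmp C h1 e) p1 = cmp C (cmp C h1 e) p2"
    using cassoc[OF C pp(1) e(2) h(1)] cassoc[OF C pp(2) e(2) h(1)] pp(3) by simp
  then have "\<exists>!u. u \<in> hom C U Z \<and> cmp C u e = cmp C h1 e"
    using eff_epiD[OF ee pb hom_ob[OF C h(1), THEN conjunct2]] hh ed by simp
  then show ?thesis using h eq by metis
qed

lemma cover_mono_iso:
  assumes sc: "subcanonical C Cov" and C: "is_cat C" and FL: "has_finite_limits C"
    and c: "c \<in> Cov" "c \<in> hom C A B"
    and mono: "\<And>U g1 g2. g1 \<in> hom C U A \<Longrightarrow> g2 \<in> hom C U A \<Longrightarrow> cmp C c g1 = cmp C c g2 \<Longrightarrow> g1 = g2"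
  shows "iso C c"
proof -
  have ee: "effective_epi C c" using sc c(1) unfolding subcanonical_def by blast
  obtain P p1 p2 where pb: "is_pullback C c c P p1 p2" using pb_exists[OF C FL c(2) c(2)] by blast
  have ed: "cdom C c = A" "ccod C c = B" "c \<in> Ar C" using c(2) unfolding hom_def by auto
  have pp: "p1 \<in> hom C P A" "p2 \<in> hom C P A" "cmp C c p1 = cmp C c p2"
    using pbD[OF pb] ed by auto
  have "p1 = p2" using mono[OF pp] .
  have A: "A \<in> Ob C" "B \<in> Ob C" using hom_ob[OF C c(2)] by auto
  have "\<exists>!u. u \<in> hom C B A \<and> cmp C u c = idt C A"
    using eff_epiD[OF ee pb A(1)] id_hom[OF C A(1)] \<open>p1 = p2\<close> ed by simp
  then obtain u where u: "u \<in> hom C B A" "cmp C u c = idt C A" by blast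
  have cu: "cmp C c u \<in> hom C B B" using cmp_hom[OF C u(1) c(2)] .
  have "cmp C (cmp C c u) c = cmp C (idt C B) c"
    using cassoc[OF C c(2) u(1) c(2)] u(2) idr[OF C c(2)] idl[OF C c(2)] by simp
  then have "cmp C c u = idt C B" using cover_epi[OF sc C FL c cu id_hom[OF C A(2)]] by blast
  then show ?thesis unfolding iso_def using u ed by auto
qed

lemma relMapD:
  assumes "canon_relMap_prop C X Y f S n P"
    "is_Map C X S MX \<pi>X" "is_Map C Y S MY \<pi>Y" "is_Map C Y (Delta n) MT \<pi>T"
    "r \<in> hom C MX MY" "\<forall>m \<theta>. S m \<theta> \<longrightarrow> cmp C (\<pi>Y m \<theta>) r = cmp C (f m) (\<pi>X m \<theta>)"
    "s \<in> hom C MT MY" "\<forall>m \<theta>. S m \<theta> \<longrightarrow> cmp C (\<pi>Y m \<theta>) s = \<pi>T m \<theta>"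
    "is_pullback C r s Pb p1 p2"
    "cX \<in> hom C (sob X n) MX" "\<forall>m \<theta>. S m \<theta> \<longrightarrow> cmp C (\<pi>X m \<theta>) cX = smor X m n \<theta>"
    "cT \<in> hom C (sob X n) MT"
    "\<forall>m \<theta>. Delta n m \<theta> \<longrightarrow> cmp C (\<pi>T m \<theta>) cT = cmp C (f m) (smor X m n \<theta>)"
    "c \<in> hom C (sob X n) Pb" "cmp C p1 c = cX" "cmp C p2 c = cT"
  shows "P c"
  using assms(1) unfolding canon_relMap_prop_def
  apply (elim allE impE)
   apply (intro conjI; rule assms)
  apply assumption
  done

definition dgen :: "nat \<Rightarrow> nat \<Rightarrow> nat" where
  "dgen p = (\<lambda>i. if i \<le> p then i else if i = Suc p then p else 0)"

definition dface0 :: "nat \<Rightarrow> nat \<Rightarrow> nat" where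
  "dface0 p = (\<lambda>i. if i \<le> p then Suc i else 0)"

lemma dmap_dgen: "dmap (Suc p) p (dgen p)"
  unfolding dmap_def dgen_def by auto

lemma dmap_did_Suc: "dmap p (Suc p) (did p)"
  unfolding dmap_def did_def by auto

lemma dgen_did: "dcomp p (dgen p) (did p) = did p"
  unfolding dcomp_def dgen_def did_def by auto

lemma did_bdry: "bdry (Suc p) p (did p)"
  unfolding bdry_def using dmap_did_Suc by (auto simp: did_def)

lemma did_nomiss: "j \<le> p \<Longrightarrow> j \<in> did p ` {0..p}"
  unfolding did_def by force

lemma top_miss: "dmap m (Suc p) \<psi> \<Longrightarrow> Suc p \<notin> \<psi> ` {0..m} \<Longrightarrow> dmap m p \<psi> \<and> dcomp m (dgen p) \<psi> = \<psi>"
proof -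
  assume a: "dmap m (Suc p) \<psi>" "Suc p \<notin> \<psi> ` {0..m}"
  have le: "\<psi> j \<le> p" if "j \<le> m" for j
  proof -
    have "\<psi> j \<le> Suc p" using dmap_le[OF a(1) that] .
    moreover have "\<psi> j \<noteq> Suc p"
    proof
      assume "\<psi> j = Suc p"
      moreover have "\<psi> j \<in> \<psi> ` {0..m}" using that by simp
      ultimately show False using a(2) by simp
    qed
    ultimately show ?thesis by simp
  qed
  have "dmap m p \<psi>" using a(1) le unfolding dmap_def by blast
  moreover have "dcomp m (dgen p) \<psi> = \<psi>"
  proof
    fix j show "dcomp m (dgen p) \<psi> j = \<psi> j"
      using le dmap_out[OF a(1)] unfolding dcomp_def dgen_def by (cases "j \<le> m") auto
  qed
  ultimately show ?thesis by blast
qed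

lemma dmap_dface0: "dmap p (Suc p) (dface0 p)"
  unfolding dmap_def dface0_def by auto

lemma dface0_bdry: "bdry (Suc p) p (dface0 p)"
  unfolding bdry_def using dmap_dface0 by (auto simp: dface0_def)

lemma dface0_horn: "bdry p m \<psi> \<Longrightarrow> horn (Suc p) 0 m (dcomp m (dface0 p) \<psi>)"
proof -
  assume a: "bdry p m \<psi>"
  then obtain j where j: "j \<le> p" "j \<notin> \<psi> ` {0..m}" and d: "dmap m p \<psi>" unfolding bdry_def by blast
  have d2: "dmap m (Suc p) (dcomp m (dface0 p) \<psi>)" using dmap_dcomp[OF d dmap_dface0] .
  have "Suc j \<notin> dcomp m (dface0 p) \<psi> ` {0..m}"
  proof
    assume "Suc j \<in> dcomp m (dface0 p) \<psi> ` {0..m}"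
    then obtain i where i: "i \<in> {0..m}" "Suc j = dcomp m (dface0 p) \<psi> i" by (rule imageE)
    then have "Suc j = Suc (\<psi> i)" using dmap_le[OF d] unfolding dcomp_def dface0_def by auto
    then show False using j(2) i(1) by auto
  qed
  then show ?thesis unfolding horn_def using d2 j(1) by auto
qed

lemma not_horn0: "bdry (Suc p) m \<theta> \<Longrightarrow> \<not> horn (Suc p) 0 m \<theta> \<Longrightarrow> 0 \<notin> \<theta> ` {0..m}"
  unfolding bdry_def horn_def by (metis)

lemma shift_fact: "dmap m (Suc p) \<theta> \<Longrightarrow> 0 \<notin> \<theta> ` {0..m} \<Longrightarrow>
  dmap m p (\<lambda>j. \<theta> j - 1) \<and> dcomp m (dface0 p) (\<lambda>j. \<theta> j - 1) = \<theta>"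
proof -
  assume a: "dmap m (Suc p) \<theta>" "0 \<notin> \<theta> ` {0..m}"
  have pos: "\<theta> j \<noteq> 0" if "j \<le> m" for j using a(2) that by auto
  have "dmap m p (\<lambda>j. \<theta> j - 1)"
    unfolding dmap_def
  proof (intro conjI allI impI)
    fix i j assume "i \<le> j \<and> j \<le> m" then show "\<theta> i - 1 \<le> \<theta> j - 1" using dmap_mono[OF a(1)] by (simp add: diff_le_mono)
  next
    fix j assume "j \<le> m" then show "\<theta> j - 1 \<le> p" using dmap_le[OF a(1)] by (simp add: le_diff_conv)
  next
    fix j assume "m < j" then show "\<theta> j - 1 = 0" using dmap_out[OF a(1)] by simp
  qed
  moreover have "dcomp m (dface0 p) (\<lambda>j. \<theta> j - 1) = \<theta>"
  proof
    fix j show "dcomp m (dface0 p) (\<lambda>j. \<theta> j - 1) j = \<theta> j"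
    proof (cases "j \<le> m")
      case True
      then have "\<theta> j - 1 \<le> p" using dmap_le[OF a(1) True] by simp
      then show ?thesis using True pos[OF True] unfolding dcomp_def dface0_def by simp
    next
      case False then show ?thesis using dmap_out[OF a(1)] unfolding dcomp_def by simp
    qed
  qed
  ultimately show ?thesis by blast
qed


locale hctx =
  fixes C :: "('o,'m) cat" and Cov :: "'m set" and k :: nat and X Y :: "('o,'m) sobj" and f :: "nat \<Rightarrow> 'm"
  assumes dc: "descent_category C Cov" and sc: "subcanonical C Cov"
    and kX: "k_groupoid C Cov k X" and kY: "k_groupoid C Cov k Y" and hc: "hypercover C Cov X Y f"
begin

lemma C: "is_cat C" using dc_cat[OF dc] .
lemma FL: "has_finite_limits C" using dc_fl[OF dc] .
lemma sX: "simplicial_object C X" using kgrp_so[OF kX] .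
lemma sY: "simplicial_object C Y" using kgrp_so[OF kY] .
lemma fm: "simplicial_map C X Y f" using hc unfolding hypercover_def by blast
lemma hcn: "canon_relMap_prop C X Y f (bdry n) n (\<lambda>c. c \<in> Cov)" using hc unfolding hypercover_def by blast
lemma fh: "f n \<in> hom C (sob X n) (sob Y n)" using smap_hom[OF fm] .

lemma fpt: "z \<in> hom C U (sob X n) \<Longrightarrow> dmap m n \<theta> \<Longrightarrow>
  cmp C (f m) (cmp C (smor X m n \<theta>) z) = cmp C (smor Y m n \<theta>) (cmp C (f n) z)"
proof -
  assume z: "z \<in> hom C U (sob X n)" and d: "dmap m n \<theta>"
  have "cmp C (f m) (cmp C (smor X m n \<theta>) z) = cmp C (cmp C (f m) (smor X m n \<theta>)) z"
    using cassoc[OF C z smor_hom[OF sX d] fh] .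
  also have "\<dots> = cmp C (cmp C (smor Y m n \<theta>) (f n)) z" using smap_nat[OF fm d] by simp
  also have "\<dots> = cmp C (smor Y m n \<theta>) (cmp C (f n) z)" using cassoc[OF C z fh smor_hom[OF sY d]] by simp
  finally show ?thesis .
qed

lemma Xpt: "z \<in> hom C U (sob X n) \<Longrightarrow> dmap m n \<theta> \<Longrightarrow> cmp C (smor X m n \<theta>) z \<in> hom C U (sob X m)"
  using cmp_hom[OF C _ smor_hom[OF sX]] by blast

lemma Ypt: "z \<in> hom C U (sob Y n) \<Longrightarrow> dmap m n \<theta> \<Longrightarrow> cmp C (smor Y m n \<theta>) z \<in> hom C U (sob Y m)"
  using cmp_hom[OF C _ smor_hom[OF sY]] by blast

lemma Q_gt:
  assumes kn: "k < n" and z: "z \<in> hom C U (sob X n)" "z' \<in> hom C U (sob X n)"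
    and eq: "\<And>m \<theta>. bdry n m \<theta> \<Longrightarrow> cmp C (smor X m n \<theta>) z = cmp C (smor X m n \<theta>) z'"
  shows "z = z'"
  using horn_uniq[OF C FL kX kn _ z] eq horn_bdry by blast

lemma Q_k:
  assumes z: "z \<in> hom C U (sob X k)" "z' \<in> hom C U (sob X k)"
    and eq: "\<And>m \<theta>. bdry k m \<theta> \<Longrightarrow> cmp C (smor X m k \<theta>) z = cmp C (smor X m k \<theta>) z'"
    and feq: "cmp C (f k) z = cmp C (f k) z'"
  shows "z = z'"
proof -
  define n where "n = Suc k"
  define w where "w = cmp C (smor X n k (dgen k)) z"
  define w' where "w' = cmp C (smor X n k (dgen k)) z'"
  have dg: "dmap n k (dgen k)" unfolding n_def by (rule dmap_dgen)
  have w: "w \<in> hom C U (sob X n)" "w' \<in> hom C U (sob X n)" unfolding w_def w'_def using Xpt[OF z(1) dg] Xpt[OF z(2) dg] by auto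
  define P where "P = (\<lambda>m (\<theta>::nat\<Rightarrow>nat). \<exists>j\<le>k. j \<notin> \<theta> ` {0..m})"
  define W where "W = (\<lambda>m \<theta>. if P m \<theta> then w else w')"
  have W: "W m \<theta> \<in> hom C U (sob X n)" for m \<theta> unfolding W_def using w by auto
  define b where "b = (\<lambda>m \<theta>. cmp C (smor X m n \<theta>) (W m \<theta>))"
  have wz: "cmp C (smor X m n \<psi>) w = cmp C (smor X m k \<psi>) z" and wz': "cmp C (smor X m n \<psi>) w' = cmp C (smor X m k \<psi>) z'"
    if "dmap m n \<psi>" "n \<notin> \<psi> ` {0..m}" for m \<psi>
  proof -
    have t: "dmap m k \<psi>" "dcomp m (dgen k) \<psi> = \<psi>" using top_miss[of m k \<psi>] that unfolding n_def by auto
    show "cmp C (smor X m n \<psi>) w = cmp C (smor X m k \<psi>) z"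
      unfolding w_def using smor_pt[OF C sX that(1) dg z(1)] t(2) by simp
    show "cmp C (smor X m n \<psi>) w' = cmp C (smor X m k \<psi>) z'"
      unfolding w'_def using smor_pt[OF C sX that(1) dg z(2)] t(2) by simp
  qed
  have kw: "cmp C (smor X m n \<psi>) w = cmp C (smor X m n \<psi>) w'"
    if "dmap m n \<psi>" "n \<notin> \<psi> ` {0..m}" "P m \<psi>" for m \<psi>
  proof -
    have t: "dmap m k \<psi>" using top_miss[of m k \<psi>] that(1,2) unfolding n_def by auto
    have "bdry k m \<psi>" using t that(3) unfolding bdry_def P_def by blast
    then have "cmp C (smor X m k \<psi>) z = cmp C (smor X m k \<psi>) z'" by (rule eq)
    then show ?thesis using wz[OF that(1,2)] wz'[OF that(1,2)] by simp
  qed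
  have topmiss: "n \<notin> \<theta> ` {0..m}" if "bdry n m \<theta>" "\<not> P m \<theta>" for m \<theta>
  proof -
    have "\<exists>j\<le>n. j \<notin> \<theta> ` {0..m}" using that(1) unfolding bdry_def by (rule conjunct2)
    then obtain j where j: "j \<le> n" "j \<notin> \<theta> ` {0..m}" by (elim exE conjE)
    have "\<not> j \<le> k"
    proof
      assume "j \<le> k"
      then have "P m \<theta>" unfolding P_def using j(2) by (intro exI[of _ j] conjI)
      then show False using that(2) by (rule notE[rotated])
    qed
    then have "j = n" using j(1) unfolding n_def by simp
    then show ?thesis using j(2) by simp
  qed
  have imgsub: "dcomp m \<theta> \<phi> ` {0..m} \<subseteq> \<theta> ` {0..k'}" if "dmap m k' \<phi>" for m k' \<theta> \<phi>
  proof
    fix x assume "x \<in> dcomp m \<theta> \<phi> ` {0..m}"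
    then obtain j where j: "j \<in> {0..m}" "x = dcomp m \<theta> \<phi> j" by (rule imageE)
    then have x: "x = \<theta> (\<phi> j)" unfolding dcomp_def by simp
    have "\<phi> j \<in> {0..k'}" using dmap_le[OF that] j(1) by simp
    then show "x \<in> \<theta> ` {0..k'}" unfolding x by (rule imageI)
  qed
  have bcone: "smap_cone C X (bdry n) U b"
  proof (rule coneI)
    show "U \<in> Ob C" using hom_ob[OF C z(1)] by blast
    show "b m \<theta> \<in> hom C U (sob X m)" if "bdry n m \<theta>" for m \<theta>
      unfolding b_def using Xpt[OF W] that unfolding bdry_def by blast
  next
    fix m k' \<theta> \<phi> assume th: "bdry n k' \<theta>" and \<phi>: "dmap m k' \<phi>"
    have d: "dmap k' n \<theta>" using th unfolding bdry_def by blast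
    have dd: "dmap m n (dcomp m \<theta> \<phi>)" using dmap_dcomp[OF \<phi> d] .
    have "cmp C (smor X m k' \<phi>) (b k' \<theta>) = cmp C (smor X m n (dcomp m \<theta> \<phi>)) (W k' \<theta>)"
      unfolding b_def by (rule smor_pt[OF C sX \<phi> d W])
    also have "\<dots> = cmp C (smor X m n (dcomp m \<theta> \<phi>)) (W m (dcomp m \<theta> \<phi>))"
    proof (cases "P k' \<theta>")
      case True
      then have "P m (dcomp m \<theta> \<phi>)" using imgsub[OF \<phi>, of \<theta>] unfolding P_def by blast
      then show ?thesis using True unfolding W_def by simp
    next
      case False
      show ?thesis
      proof (cases "P m (dcomp m \<theta> \<phi>)")
        case True
        have "n \<notin> \<theta> ` {0..k'}" using topmiss[OF th False] .
        then have "n \<notin> dcomp m \<theta> \<phi> ` {0..m}" using imgsub[OF \<phi>, of \<theta>] by blast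
        then show ?thesis using kw[OF dd _ True] False True unfolding W_def by simp
      next
        case False2: False
        then show ?thesis using False unfolding W_def by simp
      qed
    qed
    also have "\<dots> = b m (dcomp m \<theta> \<phi>)" unfolding b_def by simp
    finally show "cmp C (smor X m k' \<phi>) (b k' \<theta>) = b m (dcomp m \<theta> \<phi>)" .
  qed
  define y where "y = cmp C (f n) w"
  have y: "y \<in> hom C U (sob Y n)" unfolding y_def using cmp_hom[OF C w(1) fh] .
  have fz: "cmp C (f k) z \<in> hom C U (sob Y k)" using cmp_hom[OF C z(1) fh] .
  have yw': "cmp C (f n) w' = y"
    unfolding y_def w_def w'_def using fpt[OF z(1) dg] fpt[OF z(2) dg] feq by simp
  have fW: "cmp C (f n) (W m \<theta>) = y" for m \<theta> unfolding W_def using yw' y_def by simp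
  have fb: "cmp C (f m) (b m \<theta>) = cmp C (smor Y m n \<theta>) y" if "bdry n m \<theta>" for m \<theta>
  proof -
    have d: "dmap m n \<theta>" using that unfolding bdry_def by blast
    show ?thesis unfolding b_def using fpt[OF W d] fW by simp
  qed
  obtain MX \<pi>X where MX: "is_Map C X (bdry n) MX \<pi>X"
    using Map_exists[where S="bdry n", OF C FL sX ssub_bdry] by blast
  obtain MY \<pi>Y where MY: "is_Map C Y (bdry n) MY \<pi>Y"
    using Map_exists[where S="bdry n", OF C FL sY ssub_bdry] by blast
  obtain MT \<pi>T where MT: "is_Map C Y (Delta n) MT \<pi>T"
    using Map_exists[where S="Delta n", OF C FL sY ssub_Delta] by blast
  have piX: "\<pi>X m \<theta> \<in> hom C MX (sob X m)" if "bdry n m \<theta>" for m \<theta> using Map_pi[where S="bdry n", OF MX that] .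
  have piY: "\<pi>Y m \<theta> \<in> hom C MY (sob Y m)" if "bdry n m \<theta>" for m \<theta> using Map_pi[where S="bdry n", OF MY that] .
  have piT: "\<pi>T m \<theta> \<in> hom C MT (sob Y m)" if "Delta n m \<theta>" for m \<theta> using Map_pi[where S="Delta n", OF MT that] .
  obtain r where r: "r \<in> hom C MX MY" "\<And>m \<theta>. bdry n m \<theta> \<Longrightarrow> cmp C (\<pi>Y m \<theta>) r = cmp C (f m) (\<pi>X m \<theta>)"
    using Map_ex_u[where S="bdry n", OF MY cone_map[where S="bdry n", OF C fm is_MapD1[where S="bdry n", OF MX] ssub_bdry]] by blast
  obtain s where s: "s \<in> hom C MT MY" "\<And>m \<theta>. bdry n m \<theta> \<Longrightarrow> cmp C (\<pi>Y m \<theta>) s = \<pi>T m \<theta>"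
    using Map_ex_u[where S="bdry n", OF MY cone_restrict[where S="Delta n" and S'="bdry n", OF is_MapD1[where S="Delta n", OF MT] bdry_Delta]] by blast
  obtain Pb p1 p2 where pb: "is_pullback C r s Pb p1 p2" using pb_exists[OF C FL r(1) s(1)] by blast
  have pbd: "p1 \<in> hom C Pb MX" "p2 \<in> hom C Pb MT" "cmp C r p1 = cmp C s p2"
    using pbD[OF pb] r(1) s(1) unfolding hom_def by auto
  obtain cX where cX: "cX \<in> hom C (sob X n) MX" "\<And>m \<theta>. bdry n m \<theta> \<Longrightarrow> cmp C (\<pi>X m \<theta>) cX = smor X m n \<theta>"
    using Map_canon[where S="bdry n", OF C sX ssub_bdry MX] by blast
  obtain cT where cT: "cT \<in> hom C (sob X n) MT"
    "\<And>m \<theta>. Delta n m \<theta> \<Longrightarrow> cmp C (\<pi>T m \<theta>) cT = cmp C (f m) (smor X m n \<theta>)"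
    using Map_ex_u[where S="Delta n", OF MT cone_map[where S="Delta n", OF C fm canon_cone[where S="Delta n", OF C sX ssub_Delta] ssub_Delta]] by blast
  have rcs: "cmp C r cX = cmp C s cT"
  proof (rule Map_uniq2[where S="bdry n", OF MY cmp_hom[OF C cX(1) r(1)] cmp_hom[OF C cT(1) s(1)] _ C sY ssub_bdry])
    fix m \<theta> assume th: "bdry n m \<theta>"
    have "cmp C (\<pi>Y m \<theta>) (cmp C r cX) = cmp C (cmp C (f m) (\<pi>X m \<theta>)) cX"
      using cassoc[OF C cX(1) r(1) piY[OF th]] r(2)[OF th] by simp
    also have "\<dots> = cmp C (f m) (smor X m n \<theta>)" using cassoc[OF C cX(1) piX[OF th] fh] cX(2)[OF th] by simp
    also have "\<dots> = cmp C (\<pi>T m \<theta>) cT" using cT(2) bdry_Delta[OF th] by simp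
    also have "\<dots> = cmp C (\<pi>Y m \<theta>) (cmp C s cT)" using cassoc[OF C cT(1) s(1) piY[OF th]] s(2)[OF th] by simp
    finally show "cmp C (\<pi>Y m \<theta>) (cmp C r cX) = cmp C (\<pi>Y m \<theta>) (cmp C s cT)" .
  qed
  have rd: "cdom C r = MX" "cdom C s = MT" using r(1) s(1) unfolding hom_def by auto
  obtain c where c: "c \<in> hom C (sob X n) Pb" "cmp C p1 c = cX" "cmp C p2 c = cT"
  proof -
    have "\<exists>!u. u \<in> hom C (sob X n) Pb \<and> cmp C p1 u = cX \<and> cmp C p2 u = cT"
      using pb_univ[OF pb sob_ob[OF sX, of n], of cX cT] cX(1) cT(1) rd rcs by simp
    then show ?thesis using that by blast
  qed
  have cCov: "c \<in> Cov"
    by (rule relMapD[where S="bdry n" and P="\<lambda>c. c \<in> Cov", OF hcn MX MY MT r(1) _ s(1) _ pb cX(1) _ cT(1) _ c])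
       (use r(2) s(2) cX(2) cT(2) in auto)
  obtain u1 where u1: "u1 \<in> hom C U MX" "\<And>m \<theta>. bdry n m \<theta> \<Longrightarrow> cmp C (\<pi>X m \<theta>) u1 = b m \<theta>"
    using Map_ex_u[where S="bdry n", OF MX bcone] by blast
  obtain u2 where u2: "u2 \<in> hom C U MT" "\<And>m \<theta>. Delta n m \<theta> \<Longrightarrow> cmp C (\<pi>T m \<theta>) u2 = cmp C (smor Y m n \<theta>) y"
    using Map_ex_u[where S="Delta n", OF MT pt_cone[where S="Delta n", OF C sY ssub_Delta y]] by blast
  have rus: "cmp C r u1 = cmp C s u2"
  proof (rule Map_uniq2[where S="bdry n", OF MY cmp_hom[OF C u1(1) r(1)] cmp_hom[OF C u2(1) s(1)] _ C sY ssub_bdry])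
    fix m \<theta> assume th: "bdry n m \<theta>"
    have "cmp C (\<pi>Y m \<theta>) (cmp C r u1) = cmp C (cmp C (f m) (\<pi>X m \<theta>)) u1"
      using cassoc[OF C u1(1) r(1) piY[OF th]] r(2)[OF th] by simp
    also have "\<dots> = cmp C (f m) (b m \<theta>)" using cassoc[OF C u1(1) piX[OF th] fh] u1(2)[OF th] by simp
    also have "\<dots> = cmp C (\<pi>T m \<theta>) u2" using fb[OF th] u2(2) bdry_Delta[OF th] by simp
    also have "\<dots> = cmp C (\<pi>Y m \<theta>) (cmp C s u2)" using cassoc[OF C u2(1) s(1) piY[OF th]] s(2)[OF th] by simp
    finally show "cmp C (\<pi>Y m \<theta>) (cmp C r u1) = cmp C (\<pi>Y m \<theta>) (cmp C s u2)" .
  qed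
  have U: "U \<in> Ob C" using hom_ob[OF C z(1)] by blast
  obtain g where g: "g \<in> hom C U Pb" "cmp C p1 g = u1" "cmp C p2 g = u2"
  proof -
    have "\<exists>!u. u \<in> hom C U Pb \<and> cmp C p1 u = u1 \<and> cmp C p2 u = u2"
      using pb_univ[OF pb U, of u1 u2] u1(1) u2(1) rd rus by simp
    then show ?thesis using that by blast
  qed
  obtain Q v e where pb2: "is_pullback C c g Q v e" using pb_exists[OF C FL c(1) g(1)] by blast
  have ve: "v \<in> hom C Q (sob X n)" "e \<in> hom C Q U" "cmp C c v = cmp C g e"
    using pbD[OF pb2] c(1) g(1) unfolding hom_def by auto
  have eCov: "e \<in> Cov" using dc_pb[OF dc cCov pb2] .
  have vb: "cmp C (smor X m n \<theta>) v = cmp C (b m \<theta>) e" if th: "bdry n m \<theta>" for m \<theta>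
  proof -
    have "cmp C (smor X m n \<theta>) v = cmp C (cmp C (\<pi>X m \<theta>) (cmp C p1 c)) v" using cX(2)[OF th] c(2) by simp
    also have "\<dots> = cmp C (\<pi>X m \<theta>) (cmp C p1 (cmp C c v))"
      using cassoc[OF C c(1) pbd(1) piX[OF th]] cassoc[OF C ve(1) c(1) cmp_hom[OF C pbd(1) piX[OF th]]]
        cassoc[OF C ve(1) c(1) pbd(1)] cassoc[OF C cmp_hom[OF C ve(1) c(1)] pbd(1) piX[OF th]] by simp
    also have "\<dots> = cmp C (\<pi>X m \<theta>) (cmp C (cmp C p1 g) e)" using ve(3) cassoc[OF C ve(2) g(1) pbd(1)] by simp
    also have "\<dots> = cmp C (b m \<theta>) e" using g(2) cassoc[OF C ve(2) u1(1) piX[OF th]] u1(2)[OF th] by simp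
    finally show ?thesis .
  qed
  have we: "cmp C w e \<in> hom C Q (sob X n)" using cmp_hom[OF C ve(2) w(1)] .
  have vwe: "v = cmp C w e"
  proof (rule horn_uniq[OF C FL kX _ order_refl ve(1) we])
    show "k < n" unfolding n_def by simp
    fix m \<theta> assume h: "horn n n m \<theta>"
    have th: "bdry n m \<theta>" using horn_bdry[OF h] .
    have d: "dmap m n \<theta>" using h unfolding horn_def by blast
    obtain j where j: "j \<le> n" "j \<noteq> n" "j \<notin> \<theta> ` {0..m}" using h unfolding horn_def by blast
    have "P m \<theta>" unfolding P_def using j unfolding n_def by (intro exI[of _ j]) auto
    then have "b m \<theta> = cmp C (smor X m n \<theta>) w" unfolding b_def W_def by simp
    then show "cmp C (smor X m n \<theta>) v = cmp C (smor X m n \<theta>) (cmp C w e)"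
      using vb[OF th] cassoc[OF C ve(2) w(1) smor_hom[OF sX d]] by simp
  qed
  have dk: "dmap k n (did k)" unfolding n_def by (rule dmap_did_Suc)
  have bk: "bdry n k (did k)" unfolding n_def by (rule did_bdry)
  have nP: "\<not> P k (did k)" unfolding P_def using did_nomiss by blast
  have nmiss: "n \<notin> did k ` {0..k}" unfolding did_def n_def by auto
  have e1: "cmp C (smor X k n (did k)) w = z"
    using wz[OF dk nmiss] smor_pt_id[OF C sX z(1)] by simp
  have e2: "b k (did k) = z'"
    unfolding b_def W_def using nP wz'[OF dk nmiss] smor_pt_id[OF C sX z(2)] by simp
  have "cmp C z e = cmp C z' e"
  proof -
    have "cmp C z' e = cmp C (smor X k n (did k)) v" using vb[OF bk] e2 by simp
    also have "\<dots> = cmp C (cmp C (smor X k n (did k)) w) e"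
      using vwe cassoc[OF C ve(2) w(1) smor_hom[OF sX dk]] by simp
    also have "\<dots> = cmp C z e" using e1 by simp
    finally show ?thesis by simp
  qed
  then show ?thesis using cover_epi[OF sc C FL eCov ve(2) z] by blast
qed

lemma Q_all:
  assumes kn: "k \<le> n" and z: "z \<in> hom C U (sob X n)" "z' \<in> hom C U (sob X n)"
    and eq: "\<And>m \<theta>. bdry n m \<theta> \<Longrightarrow> cmp C (smor X m n \<theta>) z = cmp C (smor X m n \<theta>) z'"
    and feq: "cmp C (f n) z = cmp C (f n) z'"
  shows "z = z'"
proof (cases "n = k")
  case True then show ?thesis using Q_k[of z U z'] z eq feq by simp
next
  case False then show ?thesis using Q_gt[OF _ z eq] kn by simp
qed

lemma E_ex:
  assumes kn: "k < n" and b: "smap_cone C X (bdry n) U b" and y: "y \<in> hom C U (sob Y n)"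
    and fb: "\<And>m \<theta>. bdry n m \<theta> \<Longrightarrow> cmp C (f m) (b m \<theta>) = cmp C (smor Y m n \<theta>) y"
  obtains z where "z \<in> hom C U (sob X n)" "\<And>m \<theta>. bdry n m \<theta> \<Longrightarrow> cmp C (smor X m n \<theta>) z = b m \<theta>"
    "cmp C (f n) z = y"
proof -
  obtain p where p: "n = Suc p" using kn by (cases n) auto
  have kp: "k \<le> p" using kn p by simp
  have bh: "smap_cone C X (horn n 0) U b" by (rule cone_restrict[OF b horn_bdry])
  obtain z where z: "z \<in> hom C U (sob X n)" "\<And>m \<theta>. horn n 0 m \<theta> \<Longrightarrow> cmp C (smor X m n \<theta>) z = b m \<theta>"
    using horn_fill[OF C FL kX kn _ bh] by blast
  have fzh: "cmp C (f n) z \<in> hom C U (sob Y n)" using cmp_hom[OF C z(1) fh] .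
  have fz: "cmp C (f n) z = y"
  proof (rule horn_uniq[OF C FL kY kn _ fzh y])
    fix m \<theta> assume h: "horn n 0 m \<theta>"
    have d: "dmap m n \<theta>" using h unfolding horn_def by blast
    show "cmp C (smor Y m n \<theta>) (cmp C (f n) z) = cmp C (smor Y m n \<theta>) y"
      using fpt[OF z(1) d] z(2)[OF h] fb[OF horn_bdry[OF h]] by simp
  qed simp
  have all: "cmp C (smor X m n \<theta>) z = b m \<theta>" if th: "bdry n m \<theta>" for m \<theta>
  proof (cases "horn n 0 m \<theta>")
    case True then show ?thesis using z(2) by blast
  next
    case False
    have d: "dmap m n \<theta>" using th unfolding bdry_def by blast
    have miss0: "0 \<notin> \<theta> ` {0..m}" using not_horn0[of p m \<theta>] th False p by simp
    define d0 where "d0 = dface0 p"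
    have dd0: "dmap p n d0" unfolding d0_def p by (rule dmap_dface0)
    have bd0: "bdry n p d0" unfolding d0_def p by (rule dface0_bdry)
    define z0 where "z0 = cmp C (smor X p n d0) z"
    have z0: "z0 \<in> hom C U (sob X p)" unfolding z0_def using Xpt[OF z(1) dd0] .
    have b0: "b p d0 \<in> hom C U (sob X p)" using coneD2[where S="bdry n", OF b bd0] .
    have zb0: "z0 = b p d0"
    proof (rule Q_all[OF kp z0 b0])
      fix m' \<psi> assume ps: "bdry p m' \<psi>"
      have dps: "dmap m' p \<psi>" using ps unfolding bdry_def by blast
      have hh: "horn n 0 m' (dcomp m' d0 \<psi>)" unfolding d0_def p by (rule dface0_horn[OF ps])
      have "cmp C (smor X m' p \<psi>) z0 = cmp C (smor X m' n (dcomp m' d0 \<psi>)) z"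
        unfolding z0_def by (rule smor_pt[OF C sX dps dd0 z(1)])
      also have "\<dots> = b m' (dcomp m' d0 \<psi>)" using z(2)[OF hh] .
      also have "\<dots> = cmp C (smor X m' p \<psi>) (b p d0)" using coneD3[where S="bdry n", OF b bd0 dps] by simp
      finally show "cmp C (smor X m' p \<psi>) z0 = cmp C (smor X m' p \<psi>) (b p d0)" .
    next
      show "cmp C (f p) z0 = cmp C (f p) (b p d0)"
        unfolding z0_def using fpt[OF z(1) dd0] fz fb[OF bd0] by simp
    qed
    have sf: "dmap m p (\<lambda>j. \<theta> j - 1)" "dcomp m d0 (\<lambda>j. \<theta> j - 1) = \<theta>"
      using shift_fact[of m p \<theta>] d miss0 p unfolding d0_def by auto
    have "cmp C (smor X m n \<theta>) z = cmp C (smor X m p (\<lambda>j. \<theta> j - 1)) z0"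
      unfolding z0_def using smor_pt[OF C sX sf(1) dd0 z(1)] sf(2) by simp
    also have "\<dots> = b m \<theta>" using zb0 coneD3[where S="bdry n", OF b bd0 sf(1)] sf(2) by simp
    finally show ?thesis .
  qed
  show ?thesis using that z(1) all fz by blast
qed

lemma main: "k \<le> n \<Longrightarrow> canon_relMap_prop C X Y f (bdry n) n (iso C)"
  unfolding canon_relMap_prop_def
proof (intro allI impI, elim conjE)
  fix MX \<pi>X MY \<pi>Y MT \<pi>T r s Pb p1 p2 cX cT c
  assume kn: "k \<le> n" and MX: "is_Map C X (bdry n) MX \<pi>X" and MY: "is_Map C Y (bdry n) MY \<pi>Y"
    and MT: "is_Map C Y (Delta n) MT \<pi>T" and r: "r \<in> hom C MX MY"
    and r2: "\<forall>m \<theta>. bdry n m \<theta> \<longrightarrow> cmp C (\<pi>Y m \<theta>) r = cmp C (f m) (\<pi>X m \<theta>)"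
    and s: "s \<in> hom C MT MY" and s2: "\<forall>m \<theta>. bdry n m \<theta> \<longrightarrow> cmp C (\<pi>Y m \<theta>) s = \<pi>T m \<theta>"
    and pb: "is_pullback C r s Pb p1 p2" and cX: "cX \<in> hom C (sob X n) MX"
    and cX2: "\<forall>m \<theta>. bdry n m \<theta> \<longrightarrow> cmp C (\<pi>X m \<theta>) cX = smor X m n \<theta>"
    and cT: "cT \<in> hom C (sob X n) MT"
    and cT2: "\<forall>m \<theta>. Delta n m \<theta> \<longrightarrow> cmp C (\<pi>T m \<theta>) cT = cmp C (f m) (smor X m n \<theta>)"
    and c: "c \<in> hom C (sob X n) Pb" and c1: "cmp C p1 c = cX" and c2: "cmp C p2 c = cT"
  have piX: "\<pi>X m \<theta> \<in> hom C MX (sob X m)" if "bdry n m \<theta>" for m \<theta> using Map_pi[where S="bdry n", OF MX that] .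
  have piY: "\<pi>Y m \<theta> \<in> hom C MY (sob Y m)" if "bdry n m \<theta>" for m \<theta> using Map_pi[where S="bdry n", OF MY that] .
  have piT: "\<pi>T m \<theta> \<in> hom C MT (sob Y m)" if "Delta n m \<theta>" for m \<theta> using Map_pi[where S="Delta n", OF MT that] .
  have pbd: "p1 \<in> hom C Pb MX" "p2 \<in> hom C Pb MT" "cmp C r p1 = cmp C s p2" "Pb \<in> Ob C"
    using pbD[OF pb] r s unfolding hom_def by auto
  have rd: "cdom C r = MX" "cdom C s = MT" using r s unfolding hom_def by auto
  have Dn: "Delta n n (did n)" unfolding Delta_def by (rule dmap_did)
  have piTid: "cmp C (\<pi>T n (did n)) cT = f n"
    using cT2 Dn smor_id[OF sX] idr[OF C fh] by simp
  have piTD: "cmp C (smor Y m n \<theta>) (\<pi>T n (did n)) = \<pi>T m \<theta>" if "dmap m n \<theta>" for m \<theta>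
    using coneD3[where S="Delta n", OF is_MapD1[where S="Delta n", OF MT] Dn that] dcomp_did_left[OF that] by simp
  have mono: "g1 = g2" if g: "g1 \<in> hom C U (sob X n)" "g2 \<in> hom C U (sob X n)" and eq: "cmp C c g1 = cmp C c g2" for U g1 g2
  proof (rule Q_all[OF kn g])
    have "cmp C cX g1 = cmp C cX g2"
      using eq c1 cassoc[OF C g(1) c pbd(1)] cassoc[OF C g(2) c pbd(1)] by metis
    then show "cmp C (smor X m n \<theta>) g1 = cmp C (smor X m n \<theta>) g2" if th: "bdry n m \<theta>" for m \<theta>
      using cX2 th cassoc[OF C g(1) cX piX[OF th]] cassoc[OF C g(2) cX piX[OF th]] by metis
    have "cmp C cT g1 = cmp C cT g2"
      using eq c2 cassoc[OF C g(1) c pbd(2)] cassoc[OF C g(2) c pbd(2)] by metis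
    then show "cmp C (f n) g1 = cmp C (f n) g2"
      using piTid cassoc[OF C g(1) cT piT[OF Dn]] cassoc[OF C g(2) cT piT[OF Dn]] by metis
  qed
  show "iso C c"
  proof (cases "n = k")
    case True
    have "c \<in> Cov"
      by (rule relMapD[where S="bdry n" and P="\<lambda>c. c \<in> Cov", OF hcn MX MY MT r r2 s s2 pb cX cX2 cT cT2 c c1 c2])
    then show ?thesis by (rule cover_mono_iso[OF sc C FL _ c]) (rule mono)
  next
    case False
    then have kn': "k < n" using kn by simp
    define b where "b = (\<lambda>m \<theta>. cmp C (\<pi>X m \<theta>) p1)"
    define y where "y = cmp C (\<pi>T n (did n)) p2"
    have bc: "smap_cone C X (bdry n) Pb b"
      unfolding b_def by (rule cone_cmp[where S="bdry n", OF C sX ssub_bdry is_MapD1[where S="bdry n", OF MX] pbd(1)])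
    have y: "y \<in> hom C Pb (sob Y n)" unfolding y_def using cmp_hom[OF C pbd(2) piT[OF Dn]] .
    have fb: "cmp C (f m) (b m \<theta>) = cmp C (smor Y m n \<theta>) y" if th: "bdry n m \<theta>" for m \<theta>
    proof -
      have d: "dmap m n \<theta>" using th unfolding bdry_def by blast
      have "cmp C (f m) (b m \<theta>) = cmp C (cmp C (f m) (\<pi>X m \<theta>)) p1"
        unfolding b_def using cassoc[OF C pbd(1) piX[OF th] fh] .
      also have "\<dots> = cmp C (\<pi>Y m \<theta>) (cmp C r p1)" using r2 th cassoc[OF C pbd(1) r piY[OF th]] by simp
      also have "\<dots> = cmp C (\<pi>Y m \<theta>) (cmp C s p2)" using pbd(3) by simp
      also have "\<dots> = cmp C (\<pi>T m \<theta>) p2" using s2 th cassoc[OF C pbd(2) s piY[OF th]] by simp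
      also have "\<dots> = cmp C (smor Y m n \<theta>) y"
        unfolding y_def using piTD[OF d] cassoc[OF C pbd(2) piT[OF Dn] smor_hom[OF sY d]] by simp
      finally show ?thesis .
    qed
    obtain z where z: "z \<in> hom C Pb (sob X n)" "\<And>m \<theta>. bdry n m \<theta> \<Longrightarrow> cmp C (smor X m n \<theta>) z = b m \<theta>"
      "cmp C (f n) z = y"
      using E_ex[OF kn' bc y fb] by blast
    have cz: "cmp C c z \<in> hom C Pb Pb" using cmp_hom[OF C z(1) c] .
    have cXz: "cmp C cX z = p1"
    proof (rule Map_uniq2[where S="bdry n", OF MX cmp_hom[OF C z(1) cX] pbd(1) _ C sX ssub_bdry])
      fix m \<theta> assume th: "bdry n m \<theta>"
      show "cmp C (\<pi>X m \<theta>) (cmp C cX z) = cmp C (\<pi>X m \<theta>) p1"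
        using cassoc[OF C z(1) cX piX[OF th]] cX2 th z(2)[OF th] unfolding b_def by simp
    qed
    have cTz: "cmp C cT z = p2"
    proof (rule Map_uniq2[where S="Delta n", OF MT cmp_hom[OF C z(1) cT] pbd(2) _ C sY ssub_Delta])
      fix m \<theta> assume th: "Delta n m \<theta>"
      have d: "dmap m n \<theta>" using th unfolding Delta_def .
      have "cmp C (\<pi>T m \<theta>) (cmp C cT z) = cmp C (f m) (cmp C (smor X m n \<theta>) z)"
        using cassoc[OF C z(1) cT piT[OF th]] cT2 th cassoc[OF C z(1) smor_hom[OF sX d] fh] by simp
      also have "\<dots> = cmp C (smor Y m n \<theta>) y" using fpt[OF z(1) d] z(3) by simp
      also have "\<dots> = cmp C (\<pi>T m \<theta>) p2"
        unfolding y_def using piTD[OF d] cassoc[OF C pbd(2) piT[OF Dn] smor_hom[OF sY d]] by simp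
      finally show "cmp C (\<pi>T m \<theta>) (cmp C cT z) = cmp C (\<pi>T m \<theta>) p2" .
    qed
    have czid: "cmp C c z = idt C Pb"
    proof -
      have ex: "\<exists>!u. u \<in> hom C Pb Pb \<and> cmp C p1 u = p1 \<and> cmp C p2 u = p2"
        using pb_univ[OF pb pbd(4), of p1 p2] pbd rd by simp
      have "cmp C p1 (cmp C c z) = p1" using cassoc[OF C z(1) c pbd(1)] c1 cXz by simp
      moreover have "cmp C p2 (cmp C c z) = p2" using cassoc[OF C z(1) c pbd(2)] c2 cTz by simp
      moreover have "cmp C p1 (idt C Pb) = p1" "cmp C p2 (idt C Pb) = p2" using idr[OF C pbd(1)] idr[OF C pbd(2)] by auto
      ultimately show ?thesis using ex cz id_hom[OF C pbd(4)] by blast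
    qed
    have zc: "cmp C z c \<in> hom C (sob X n) (sob X n)" using cmp_hom[OF C c z(1)] .
    have idX: "idt C (sob X n) \<in> hom C (sob X n) (sob X n)" using id_hom[OF C sob_ob[OF sX]] .
    have "cmp C c (cmp C z c) = cmp C c (idt C (sob X n))"
      using cassoc[OF C c z(1) c] czid idl[OF C c] idr[OF C c] by simp
    then have zcid: "cmp C z c = idt C (sob X n)" using mono[OF zc idX] by blast
    show ?thesis unfolding iso_def using c z(1) czid zcid unfolding hom_def by auto
  qed
qed

end

theorem lemma3p13:
  fixes C :: "('o,'m) cat" and Cov :: "'m set" and k :: nat
    and X Y :: "('o,'m) sobj" and f :: "nat \<Rightarrow> 'm"
  assumes "descent_category C Cov"
    and "subcanonical C Cov"
    and "k_groupoid C Cov k X"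
    and "k_groupoid C Cov k Y"
    and "hypercover C Cov X Y f"
  shows "\<forall>n. k \<le> n \<longrightarrow> canon_relMap_prop C X Y f (bdry n) n (iso C)"
proof -
  interpret hctx C Cov k X Y f using assms by unfold_locales
  show ?thesis using main by blast
qed


end
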